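(* Let $R:\mathbb R^N\to\mathbb R\cup\{+\infty\}$ be a polyhedral function of the form $$R(x)=\max_{i=1,\dots,k}\{\langle a_i,x\rangle-\alpha_i\}+\iota_{\bigcap_{i=k+1}^m\{x:\langle a_i,x\rangle-\alpha_i\le0\}}(x),$$ with $1\le k\le m$, $a_i\in\mathbb R^N$, $\alpha_i\in\mathbb R$, and $\mathrm{dom}(R)\neq\emptyset$. For $x\in\mathrm{dom}(R)$ let $I^{\max}(x)=\{i\in\{1,\dots,k\}:\langle a_i,x\rangle-\alpha_i=R(x)\}$, $I^{\mathrm{feas}}(x)=\{i\in\{k+1,\dots,m\}:\langle a_i,x\rangle=\alpha_i\}$, and for $I\subset\{1,\dots,m\}$ set $M_I=\{x\in\mathrm{dom}(R):I^{\max}(x)\cup I^{\mathrm{feas}}(x)=I\}$ and $M_I^*=\mathrm{ri}(\mathrm{conv}\{a_i:i\in I\cap\{1,\dots,k\}\})+\mathrm{ri}(\mathrm{cone}\{a_i:i\in I\cap\{k+1,\dots,m\}\})$ (with $\mathrm{cone}\,\emptyset=\{0\}$). Then $\{M_I: M_I\neq\emptyset\}$ is a stratification of $\mathrm{dom}(R)$, $J_R(M_I)=M_I^*$ and $J_{R^*}(M_I^* )=M_I$ whenever $M_I\neq\emptyset$, and $R$ is mirror-stratifiable with respect to $\{M_I\}_{M_I\ne\emptyset}$ and $\{M_I^*\}_{M_I\ne\emptyset}$.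
   Context: $\iota_C$ denotes the indicator function of $C$ (0 on $C$, $+\infty$ outside); $\mathrm{ri}$ is the relative interior, $\mathrm{conv}$ the convex hull, $\mathrm{cone}$ the convex conic hull. A stratification of a set $D$ is a finite partition $\mathcal S$ of $D$ into nonempty sets called strata such that for any strata $M,M'$, $M\cap\mathrm{cl}(M')\neq\emptyset$ implies $M\subset\mathrm{cl}(M')$; ordered by $M\le M'$ iff $M\subset\mathrm{cl}(M')$. For a proper lsc convex $R$ with conjugate $R^*$, $J_R(S)=\bigcup_{x\in S}\mathrm{ri}(\partial R(x))$ and $J_{R^*}$ analogously. $R$ is mirror-stratifiable with respect to a stratification $\mathcal S$ of $\mathrm{dom}(\partial R)$ and a stratification $\mathcal S^*$ of $\mathrm{dom}(\partial R^* )$ if (i) $J_R$ maps $\mathcal S$ bijectively onto $\mathcal S^*$ with inverse $J_{R^*}$, i.e. for all $M\in\mathcal S$, $M^*\in\mathcal S^*$: $M^*=J_R(M)\iff J_{R^*}(M^* )=M$; and (ii) for all $M,M'\in\mathcal S$: $M\le M'\iff J_R(M)\ge J_R(M')$. *)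

theory Defs
  imports "HOL-Analysis.Analysis"
begin

text \<open>Convex conic hull: smallest convex cone containing S and 0 (so it is {0} for S empty).\<close>
definition ccone :: "'a::real_vector set \<Rightarrow> 'a set" where
  "ccone S = (\<lambda>T. convex T \<and> cone T \<and> 0 \<in> T) hull S"

definition subdiff :: "('a::real_inner \<Rightarrow> ereal) \<Rightarrow> 'a \<Rightarrow> 'a set" where
  "subdiff f x = (if \<bar>f x\<bar> \<noteq> \<infinity> then {g. \<forall>y. f y \<ge> f x + ereal (g \<bullet> (y - x))} else {})"

definition dom_subdiff :: "('a::real_inner \<Rightarrow> ereal) \<Rightarrow> 'a set" where
  "dom_subdiff f = {x. subdiff f x \<noteq> {}}"

definition fconj :: "('a::real_inner \<Rightarrow> ereal) \<Rightarrow> 'a \<Rightarrow> ereal" where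
  "fconj f v = (SUP x. ereal (v \<bullet> x) - f x)"

definition JJ :: "('a::euclidean_space \<Rightarrow> ereal) \<Rightarrow> 'a set \<Rightarrow> 'a set" where
  "JJ f S = (\<Union>x\<in>S. rel_interior (subdiff f x))"

definition is_stratification :: "'a::topological_space set \<Rightarrow> 'a set set \<Rightarrow> bool" where
  "is_stratification D \<S> \<longleftrightarrow>
     finite \<S> \<and> (\<forall>M\<in>\<S>. M \<noteq> {}) \<and> \<Union>\<S> = D \<and>
     (\<forall>M\<in>\<S>. \<forall>M'\<in>\<S>. M \<noteq> M' \<longrightarrow> M \<inter> M' = {}) \<and>
     (\<forall>M\<in>\<S>. \<forall>M'\<in>\<S>. M \<inter> closure M' \<noteq> {} \<longrightarrow> M \<subseteq> closure M')"

definition mirror_stratifiable ::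
  "('a::euclidean_space \<Rightarrow> ereal) \<Rightarrow> 'a set set \<Rightarrow> 'a set set \<Rightarrow> bool" where
  "mirror_stratifiable R \<S> \<S>s \<longleftrightarrow>
     is_stratification (dom_subdiff R) \<S> \<and>
     is_stratification (dom_subdiff (fconj R)) \<S>s \<and>
     bij_betw (JJ R) \<S> \<S>s \<and>
     (\<forall>M\<in>\<S>. \<forall>Ms\<in>\<S>s. Ms = JJ R M \<longleftrightarrow> JJ (fconj R) Ms = M) \<and>
     (\<forall>M\<in>\<S>. \<forall>M'\<in>\<S>. M \<subseteq> closure M' \<longleftrightarrow> JJ R M' \<subseteq> closure (JJ R M))"

definition polyR :: "nat \<Rightarrow> nat \<Rightarrow> (nat \<Rightarrow> 'a::euclidean_space) \<Rightarrow> (nat \<Rightarrow> real) \<Rightarrow> 'a \<Rightarrow> ereal" where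
  "polyR k m a \<alpha> x =
     (if \<forall>i\<in>{k+1..m}. a i \<bullet> x - \<alpha> i \<le> 0
      then ereal (Max ((\<lambda>i. a i \<bullet> x - \<alpha> i) ` {1..k})) else \<infinity>)"

definition edom :: "('a \<Rightarrow> ereal) \<Rightarrow> 'a set" where
  "edom f = {x. f x < \<infinity>}"

definition Imax :: "nat \<Rightarrow> nat \<Rightarrow> (nat \<Rightarrow> 'a::euclidean_space) \<Rightarrow> (nat \<Rightarrow> real) \<Rightarrow> 'a \<Rightarrow> nat set" where
  "Imax k m a \<alpha> x = {i\<in>{1..k}. ereal (a i \<bullet> x - \<alpha> i) = polyR k m a \<alpha> x}"

definition Ifeas :: "nat \<Rightarrow> nat \<Rightarrow> (nat \<Rightarrow> 'a::euclidean_space) \<Rightarrow> (nat \<Rightarrow> real) \<Rightarrow> 'a \<Rightarrow> nat set" where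
  "Ifeas k m a \<alpha> x = {i\<in>{k+1..m}. a i \<bullet> x = \<alpha> i}"

definition MI :: "nat \<Rightarrow> nat \<Rightarrow> (nat \<Rightarrow> 'a::euclidean_space) \<Rightarrow> (nat \<Rightarrow> real) \<Rightarrow> nat set \<Rightarrow> 'a set" where
  "MI k m a \<alpha> I = {x\<in>edom (polyR k m a \<alpha>). Imax k m a \<alpha> x \<union> Ifeas k m a \<alpha> x = I}"

definition MIs :: "nat \<Rightarrow> nat \<Rightarrow> (nat \<Rightarrow> 'a::euclidean_space) \<Rightarrow> nat set \<Rightarrow> 'a set" where
  "MIs k m a I = {u + v | u v. u \<in> rel_interior (convex hull (a ` (I \<inter> {1..k}))) \<and>
                              v \<in> rel_interior (ccone (a ` (I \<inter> {k+1..m})))}"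

end

theory Submission
  imports Defs
begin


lemma ccone_eq: "ccone S = convex_cone hull S"
proof -
  have "(\<lambda>T. convex T \<and> cone T \<and> 0 \<in> T) = convex_cone"
    by (auto simp: fun_eq_iff convex_cone_def conic_def cone_def) (metis order_refl scaleR_zero_left)
  then show ?thesis unfolding ccone_def by (rule arg_cong[where f="\<lambda>P. P hull S"])
qed

lemma convex_cone_hull_sum:
  assumes "\<And>i. i \<in> A \<Longrightarrow> z i \<in> convex_cone hull S"
  shows "sum z A \<in> convex_cone hull S"
  using assms
proof (induction A rule: infinite_finite_induct)
  case (infinite A) then show ?case by (simp add: convex_cone_hull_contains_0)
next
  case empty then show ?case by (simp add: convex_cone_hull_contains_0)
next
  case (insert x F) then show ?case by (simp add: convex_cone_hull_add)
qed

lemma cone_idx: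
  fixes a :: "nat \<Rightarrow> 'a::euclidean_space"
  assumes "finite A"
  shows "ccone (a ` A) = {(\<Sum>i\<in>A. l i *\<^sub>R a i) | l. \<forall>i\<in>A. 0 \<le> l i}"
proof
  show "ccone (a ` A) \<subseteq> {(\<Sum>i\<in>A. l i *\<^sub>R a i) | l. \<forall>i\<in>A. 0 \<le> l i}"
    unfolding ccone_eq
  proof (rule hull_minimal)
    show "a ` A \<subseteq> {(\<Sum>i\<in>A. l i *\<^sub>R a i) | l. \<forall>i\<in>A. 0 \<le> l i}"
    proof
      fix x assume "x \<in> a ` A"
      then obtain j where j: "j \<in> A" "x = a j" by auto
      have "(\<Sum>i\<in>A. (if i = j then 1 else 0) *\<^sub>R a i) = a j"
      proof -
        have "(\<Sum>i\<in>A. (if i = j then 1 else 0) *\<^sub>R a i) = (\<Sum>i\<in>A. if i = j then a i else 0)"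
          by (rule sum.cong) auto
        then show ?thesis using assms j by simp
      qed
      then show "x \<in> {(\<Sum>i\<in>A. l i *\<^sub>R a i) | l. \<forall>i\<in>A. 0 \<le> l i}"
        using j by (intro CollectI exI[of _ "\<lambda>i. if i = j then 1 else 0"]) auto
    qed
    show "convex_cone {(\<Sum>i\<in>A. l i *\<^sub>R a i) | l. \<forall>i\<in>A. 0 \<le> l i}"
      unfolding convex_cone_iff
    proof (intro conjI ballI allI impI)
      show "0 \<in> {(\<Sum>i\<in>A. l i *\<^sub>R a i) | l. \<forall>i\<in>A. 0 \<le> l i}"
        by (intro CollectI exI[of _ "\<lambda>i. 0"]) auto
      fix x y assume "x \<in> {(\<Sum>i\<in>A. l i *\<^sub>R a i) | l. \<forall>i\<in>A. 0 \<le> l i}"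
        "y \<in> {(\<Sum>i\<in>A. l i *\<^sub>R a i) | l. \<forall>i\<in>A. 0 \<le> l i}"
      then obtain l1 l2 where "x = (\<Sum>i\<in>A. l1 i *\<^sub>R a i)" "\<forall>i\<in>A. 0 \<le> l1 i"
        "y = (\<Sum>i\<in>A. l2 i *\<^sub>R a i)" "\<forall>i\<in>A. 0 \<le> l2 i" by blast
      then show "x + y \<in> {(\<Sum>i\<in>A. l i *\<^sub>R a i) | l. \<forall>i\<in>A. 0 \<le> l i}"
        by (intro CollectI exI[of _ "\<lambda>i. l1 i + l2 i"])
           (auto simp: scaleR_add_left sum.distrib)
    next
      fix x and c :: real assume "x \<in> {(\<Sum>i\<in>A. l i *\<^sub>R a i) | l. \<forall>i\<in>A. 0 \<le> l i}" "0 \<le> c"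
      then obtain l1 where "x = (\<Sum>i\<in>A. l1 i *\<^sub>R a i)" "\<forall>i\<in>A. 0 \<le> l1 i" by blast
      then show "c *\<^sub>R x \<in> {(\<Sum>i\<in>A. l i *\<^sub>R a i) | l. \<forall>i\<in>A. 0 \<le> l i}"
        using \<open>0 \<le> c\<close>
        by (intro CollectI exI[of _ "\<lambda>i. c * l1 i"]) (auto simp: scaleR_sum_right)
    qed
  qed
next
  show "{(\<Sum>i\<in>A. l i *\<^sub>R a i) | l. \<forall>i\<in>A. 0 \<le> l i} \<subseteq> ccone (a ` A)"
    unfolding ccone_eq
    by (auto intro!: convex_cone_hull_sum convex_cone_hull_mul intro: hull_inc)
qed

lemma conv_idx:
  fixes a :: "nat \<Rightarrow> 'a::euclidean_space"
  assumes "finite A"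
  shows "convex hull (a ` A) = {(\<Sum>i\<in>A. l i *\<^sub>R a i) | l. (\<forall>i\<in>A. 0 \<le> l i) \<and> sum l A = 1}"
proof
  show "convex hull (a ` A) \<subseteq> {(\<Sum>i\<in>A. l i *\<^sub>R a i) | l. (\<forall>i\<in>A. 0 \<le> l i) \<and> sum l A = 1}"
  proof (rule hull_minimal)
    show "a ` A \<subseteq> {(\<Sum>i\<in>A. l i *\<^sub>R a i) | l. (\<forall>i\<in>A. 0 \<le> l i) \<and> sum l A = 1}"
    proof
      fix x assume "x \<in> a ` A"
      then obtain j where j: "j \<in> A" "x = a j" by auto
      have "(\<Sum>i\<in>A. (if i = j then 1 else 0) *\<^sub>R a i) = a j"
      proof -
        have "(\<Sum>i\<in>A. (if i = j then 1 else 0) *\<^sub>R a i) = (\<Sum>i\<in>A. if i = j then a i else 0)"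
          by (rule sum.cong) auto
        then show ?thesis using assms j by simp
      qed
      moreover have "(\<Sum>i\<in>A. (if i = j then 1 else 0::real)) = 1"
        using assms j by simp
      ultimately show "x \<in> {(\<Sum>i\<in>A. l i *\<^sub>R a i) | l. (\<forall>i\<in>A. 0 \<le> l i) \<and> sum l A = 1}"
        using j by (intro CollectI exI[of _ "\<lambda>i. if i = j then 1 else 0"]) auto
    qed
    show "convex {(\<Sum>i\<in>A. l i *\<^sub>R a i) | l. (\<forall>i\<in>A. 0 \<le> l i) \<and> sum l A = 1}"
    proof (rule convexI)
      fix x y and u v :: real
      assume "x \<in> {(\<Sum>i\<in>A. l i *\<^sub>R a i) | l. (\<forall>i\<in>A. 0 \<le> l i) \<and> sum l A = 1}"
        "y \<in> {(\<Sum>i\<in>A. l i *\<^sub>R a i) | l. (\<forall>i\<in>A. 0 \<le> l i) \<and> sum l A = 1}"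
        and uv: "0 \<le> u" "0 \<le> v" "u + v = 1"
      then obtain l1 l2 where "x = (\<Sum>i\<in>A. l1 i *\<^sub>R a i)" "\<forall>i\<in>A. 0 \<le> l1 i" "sum l1 A = 1"
        "y = (\<Sum>i\<in>A. l2 i *\<^sub>R a i)" "\<forall>i\<in>A. 0 \<le> l2 i" "sum l2 A = 1" by blast
      then show "u *\<^sub>R x + v *\<^sub>R y \<in> {(\<Sum>i\<in>A. l i *\<^sub>R a i) | l. (\<forall>i\<in>A. 0 \<le> l i) \<and> sum l A = 1}"
        using uv
        by (intro CollectI exI[of _ "\<lambda>i. u * l1 i + v * l2 i"])
           (auto simp: scaleR_add_left sum.distrib scaleR_sum_right sum_distrib_left[symmetric])
    qed
  qed
next
  show "{(\<Sum>i\<in>A. l i *\<^sub>R a i) | l. (\<forall>i\<in>A. 0 \<le> l i) \<and> sum l A = 1} \<subseteq> convex hull (a ` A)"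
  proof clarify
    fix l :: "nat \<Rightarrow> real" assume "\<forall>i\<in>A. 0 \<le> l i" "sum l A = 1"
    then show "(\<Sum>i\<in>A. l i *\<^sub>R a i) \<in> convex hull (a ` A)"
      by (intro convex_sum) (auto simp: assms intro: hull_inc)
  qed
qed




lemma ri_conv_idx:
  fixes a :: "nat \<Rightarrow> 'a::euclidean_space"
  assumes "finite A" "A \<noteq> {}"
  shows "rel_interior (convex hull (a ` A)) = {(\<Sum>i\<in>A. l i *\<^sub>R a i) | l. (\<forall>i\<in>A. 0 < l i) \<and> sum l A = 1}"
proof -
  have "rel_interior (convex hull (\<Union>((\<lambda>i. {a i}) ` A))) =
    {sum (\<lambda>i. c i *\<^sub>R s i) A | c s. (\<forall>i\<in>A. c i > 0) \<and> sum c A = 1 \<and>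
      (\<forall>i\<in>A. s i \<in> rel_interior {a i})}"
    by (rule rel_interior_convex_hull_union) (auto simp: assms)
  moreover have "\<Union>((\<lambda>i. {a i}) ` A) = a ` A" by auto
  moreover have "{sum (\<lambda>i. c i *\<^sub>R s i) A | c s. (\<forall>i\<in>A. c i > 0) \<and> sum c A = 1 \<and>
      (\<forall>i\<in>A. s i \<in> rel_interior {a i})} = {(\<Sum>i\<in>A. l i *\<^sub>R a i) | l. (\<forall>i\<in>A. 0 < l i) \<and> sum l A = 1}"
  proof (intro set_eqI iffI)
    fix x assume "x \<in> {sum (\<lambda>i. c i *\<^sub>R s i) A | c s. (\<forall>i\<in>A. c i > 0) \<and> sum c A = 1 \<and>
      (\<forall>i\<in>A. s i \<in> rel_interior {a i})}"
    then obtain c s where cs: "x = sum (\<lambda>i. c i *\<^sub>R s i) A" "\<forall>i\<in>A. c i > 0" "sum c A = 1"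
      "\<forall>i\<in>A. s i = a i" by auto
    then have "x = (\<Sum>i\<in>A. c i *\<^sub>R a i)" by (auto intro: sum.cong)
    then show "x \<in> {(\<Sum>i\<in>A. l i *\<^sub>R a i) | l. (\<forall>i\<in>A. 0 < l i) \<and> sum l A = 1}"
      using cs by blast
  next
    fix x assume "x \<in> {(\<Sum>i\<in>A. l i *\<^sub>R a i) | l. (\<forall>i\<in>A. 0 < l i) \<and> sum l A = 1}"
    then obtain l where "x = (\<Sum>i\<in>A. l i *\<^sub>R a i)" "\<forall>i\<in>A. 0 < l i" "sum l A = 1" by auto
    then show "x \<in> {sum (\<lambda>i. c i *\<^sub>R s i) A | c s. (\<forall>i\<in>A. c i > 0) \<and> sum c A = 1 \<and>
      (\<forall>i\<in>A. s i \<in> rel_interior {a i})}"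
      by (intro CollectI exI[of _ l] exI[of _ a]) auto
  qed
  ultimately show ?thesis by simp
qed

lemma affine_line: "affine {t *\<^sub>R (b::'a::real_vector) | t. True}"
  unfolding affine_def
proof (intro ballI allI impI)
  fix x y and u v :: real assume "x \<in> {t *\<^sub>R b | t. True}" "y \<in> {t *\<^sub>R b | t. True}" "u + v = 1"
  then obtain s t where "x = s *\<^sub>R b" "y = t *\<^sub>R b" by auto
  then show "u *\<^sub>R x + v *\<^sub>R y \<in> {t *\<^sub>R b | t. True}"
    by (intro CollectI exI[of _ "u * s + v * t"]) (simp add: scaleR_add_left)
qed

lemma ri_ray:
  fixes b :: "'a::euclidean_space"
  shows "rel_interior {t *\<^sub>R b | t. 0 \<le> t} = {t *\<^sub>R b | t. 0 < t}"
proof (cases "b = 0")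
  case True
  then have "{t *\<^sub>R b | t. 0 \<le> (t::real)} = {0}" "{t *\<^sub>R b | t. 0 < (t::real)} = {0}"
    by (auto intro: exI[of _ 1])
  then show ?thesis by simp
next
  case False
  define Ry where "Ry = {t *\<^sub>R b | t. 0 \<le> t}"
  have aff: "affine hull Ry \<subseteq> {t *\<^sub>R b | t. True}"
    by (rule hull_minimal) (use affine_line[of b] in \<open>auto simp: Ry_def\<close>)
  have "0 \<in> Ry" "b \<in> Ry" unfolding Ry_def by (auto intro: exI[of _ 0] exI[of _ 1])
  have nb: "norm b > 0" using False by simp
  show ?thesis unfolding Ry_def[symmetric]
  proof (intro set_eqI iffI)
    fix x assume x: "x \<in> rel_interior Ry"
    then have "x \<in> Ry" using rel_interior_subset by blast
    then obtain t where t: "x = t *\<^sub>R b" "0 \<le> t" unfolding Ry_def by auto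
    obtain e where e: "e > 0" "ball x e \<inter> affine hull Ry \<subseteq> Ry"
      using x mem_rel_interior_ball by blast
    have "t > 0"
    proof (rule ccontr)
      assume "\<not> t > 0"
      then have x0: "x = 0" using t by simp
      define s where "s = - e / (2 * norm b)"
      have "s *\<^sub>R b = (1 - s) *\<^sub>R 0 + s *\<^sub>R b" by simp
      also have "\<dots> \<in> affine hull Ry"
        by (rule mem_affine[OF affine_affine_hull]) (auto intro: hull_inc \<open>0 \<in> Ry\<close> \<open>b \<in> Ry\<close>)
      finally have "s *\<^sub>R b \<in> affine hull Ry" .
      moreover have "s *\<^sub>R b \<in> ball x e"
        using nb e by (simp add: x0 s_def dist_norm)
      ultimately have "s *\<^sub>R b \<in> Ry" using e by blast
      then obtain r where r: "s *\<^sub>R b = r *\<^sub>R b" "0 \<le> r" unfolding Ry_def by auto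
      then have "s = r" using False by (simp add: scaleR_cancel_right)
      moreover have "s < 0" using nb e by (simp add: s_def)
      ultimately show False using r by simp
    qed
    then show "x \<in> {t *\<^sub>R b | t. 0 < t}" using t by blast
  next
    fix x assume "x \<in> {t *\<^sub>R b | t. 0 < t}"
    then obtain t where t: "x = t *\<^sub>R b" "0 < t" by auto
    show "x \<in> rel_interior Ry"
      unfolding mem_rel_interior_ball
    proof (intro conjI exI)
      show "x \<in> Ry" using t unfolding Ry_def by auto
      show "t * norm b > 0" using t nb by simp
      show "ball x (t * norm b) \<inter> affine hull Ry \<subseteq> Ry"
      proof
        fix y assume y: "y \<in> ball x (t * norm b) \<inter> affine hull Ry"
        then obtain s where s: "y = s *\<^sub>R b" using aff by auto
        have "norm ((t - s) *\<^sub>R b) < t * norm b"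
          using y by (simp add: s t dist_norm scaleR_diff_left)
        then have "\<bar>t - s\<bar> < t" using nb by simp
        then have "0 \<le> s" by simp
        then show "y \<in> Ry" unfolding Ry_def s by auto
      qed
    qed
  qed
qed




lemma convex_ray: "convex {t *\<^sub>R (b::'a::real_vector) | t. 0 \<le> t}"
proof (rule convexI)
  fix x y and u v :: real assume "x \<in> {t *\<^sub>R b | t. 0 \<le> t}" "y \<in> {t *\<^sub>R b | t. 0 \<le> t}"
    "0 \<le> u" "0 \<le> v" "u + v = 1"
  then obtain s t where "x = s *\<^sub>R b" "y = t *\<^sub>R b" "0 \<le> s" "0 \<le> t" by auto
  then show "u *\<^sub>R x + v *\<^sub>R y \<in> {t *\<^sub>R b | t. 0 \<le> t}"
    using \<open>0 \<le> u\<close> \<open>0 \<le> v\<close>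
    by (intro CollectI exI[of _ "u * s + v * t"]) (simp add: scaleR_add_left)
qed

lemma ri_cone_idx:
  fixes a :: "nat \<Rightarrow> 'a::euclidean_space"
  assumes "finite A"
  shows "rel_interior (ccone (a ` A)) = {(\<Sum>i\<in>A. l i *\<^sub>R a i) | l. \<forall>i\<in>A. 0 < l i}"
proof (cases "A = {}")
  case True
  then show ?thesis by (simp add: ccone_eq)
next
  case False
  define ray where "ray = (\<lambda>i. {t *\<^sub>R a i | t. 0 \<le> t})"
  define n where "n = real (card A)"
  have n: "n > 0" using False assms by (simp add: n_def card_gt_0_iff)
  have eqH: "ccone (a ` A) = convex hull (\<Union>(ray ` A))"
  proof
    show "ccone (a ` A) \<subseteq> convex hull (\<Union>(ray ` A))"
    proof
      fix x assume "x \<in> ccone (a ` A)"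
      then obtain l where l: "x = (\<Sum>i\<in>A. l i *\<^sub>R a i)" "\<forall>i\<in>A. 0 \<le> l i"
        using cone_idx[OF assms, of a] by auto
      have "x = (\<Sum>i\<in>A. (1 / n) *\<^sub>R ((n * l i) *\<^sub>R a i))"
        using n by (simp add: l)
      also have "\<dots> \<in> convex hull (\<Union>(ray ` A))"
      proof (rule convex_sum)
        show "(\<Sum>i\<in>A. 1 / n) = 1" using n by (simp add: n_def)
        fix i assume "i \<in> A"
        then show "(n * l i) *\<^sub>R a i \<in> convex hull (\<Union>(ray ` A))"
          using l n by (intro hull_inc) (auto simp: ray_def intro!: exI[of _ "n * l i"])
      qed (use assms n in auto)
      finally show "x \<in> convex hull (\<Union>(ray ` A))" .
    qed
    show "convex hull (\<Union>(ray ` A)) \<subseteq> ccone (a ` A)"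
      unfolding ccone_eq
    proof (rule hull_minimal)
      show "\<Union>(ray ` A) \<subseteq> convex_cone hull a ` A"
        by (auto simp: ray_def intro!: convex_cone_hull_mul intro: hull_inc)
    qed (rule convex_convex_cone_hull)
  qed
  have "rel_interior (convex hull (\<Union>(ray ` A))) =
    {sum (\<lambda>i. c i *\<^sub>R s i) A | c s. (\<forall>i\<in>A. c i > 0) \<and> sum c A = 1 \<and>
      (\<forall>i\<in>A. s i \<in> rel_interior (ray i))}"
    by (rule rel_interior_convex_hull_union) (auto simp: assms ray_def convex_ray)
  also have "\<dots> = {(\<Sum>i\<in>A. l i *\<^sub>R a i) | l. \<forall>i\<in>A. 0 < l i}"
  proof (intro set_eqI iffI)
    fix x assume "x \<in> {sum (\<lambda>i. c i *\<^sub>R s i) A | c s. (\<forall>i\<in>A. c i > 0) \<and> sum c A = 1 \<and>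
      (\<forall>i\<in>A. s i \<in> rel_interior (ray i))}"
    then obtain c s where cs: "x = sum (\<lambda>i. c i *\<^sub>R s i) A" "\<forall>i\<in>A. c i > 0"
      "\<forall>i\<in>A. \<exists>t. s i = t *\<^sub>R a i \<and> 0 < t" by (auto simp: ray_def ri_ray)
    then obtain t where t: "\<forall>i\<in>A. s i = t i *\<^sub>R a i \<and> 0 < t i" by metis
    have "x = (\<Sum>i\<in>A. (c i * t i) *\<^sub>R a i)" using cs t by (auto intro: sum.cong)
    moreover have "\<forall>i\<in>A. 0 < c i * t i" using cs t by auto
    ultimately show "x \<in> {(\<Sum>i\<in>A. l i *\<^sub>R a i) | l. \<forall>i\<in>A. 0 < l i}"
      by (intro CollectI exI[of _ "\<lambda>i. c i * t i"]) auto
  next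
    fix x assume "x \<in> {(\<Sum>i\<in>A. l i *\<^sub>R a i) | l. \<forall>i\<in>A. 0 < l i}"
    then obtain l where l: "x = (\<Sum>i\<in>A. l i *\<^sub>R a i)" "\<forall>i\<in>A. 0 < l i" by auto
    have "x = (\<Sum>i\<in>A. (1 / n) *\<^sub>R ((n * l i) *\<^sub>R a i))"
      using n by (simp add: l)
    moreover have "(\<Sum>i\<in>A. 1 / n) = 1" using n by (simp add: n_def)
    moreover have "\<forall>i\<in>A. (n * l i) *\<^sub>R a i \<in> rel_interior (ray i)"
    proof
      fix i assume "i \<in> A"
      then show "(n * l i) *\<^sub>R a i \<in> rel_interior (ray i)"
        using l n by (auto simp: ray_def ri_ray intro!: exI[of _ "n * l i"])
    qed
    ultimately show "x \<in> {sum (\<lambda>i. c i *\<^sub>R s i) A | c s. (\<forall>i\<in>A. c i > 0) \<and> sum c A = 1 \<and>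
      (\<forall>i\<in>A. s i \<in> rel_interior (ray i))}"
      using n by (intro CollectI exI[of _ "\<lambda>i. 1 / n"] exI[of _ "\<lambda>i. (n * l i) *\<^sub>R a i"]) auto
  qed
  finally show ?thesis using eqH by simp
qed




locale polyf =
  fixes k m :: nat and a :: "nat \<Rightarrow> 'a::euclidean_space" and \<alpha> :: "nat \<Rightarrow> real"
  assumes k1: "1 \<le> k" and km: "k \<le> m"
begin

abbreviation "PP \<equiv> {1..k}"
abbreviation "QQ \<equiv> {k+1..m}"
abbreviation "RR \<equiv> polyR k m a \<alpha>"

definition ff :: "nat \<Rightarrow> 'a \<Rightarrow> real" where "ff i x = a i \<bullet> x - \<alpha> i"
definition Rv :: "'a \<Rightarrow> real" where "Rv x = Max ((\<lambda>i. ff i x) ` PP)"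
definition DD :: "'a set" where "DD = {x. \<forall>j\<in>QQ. ff j x \<le> 0}"
definition II :: "'a \<Rightarrow> nat set" where "II x = Imax k m a \<alpha> x \<union> Ifeas k m a \<alpha> x"
definition FF :: "nat set \<Rightarrow> 'a set" where "FF K = {y\<in>DD. K \<subseteq> II y}"
definition CC :: "nat set \<Rightarrow> 'a set" where
  "CC K = convex hull (a ` (K \<inter> PP)) + ccone (a ` (K \<inter> QQ))"
definition combo :: "nat set \<Rightarrow> nat set \<Rightarrow> (nat \<Rightarrow> real) \<Rightarrow> (nat \<Rightarrow> real) \<Rightarrow> 'a" where
  "combo A B l \<mu> = (\<Sum>i\<in>A. l i *\<^sub>R a i) + (\<Sum>j\<in>B. \<mu> j *\<^sub>R a j)"
definition cst :: "nat set \<Rightarrow> nat set \<Rightarrow> (nat \<Rightarrow> real) \<Rightarrow> (nat \<Rightarrow> real) \<Rightarrow> real" where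
  "cst A B l \<mu> = (\<Sum>i\<in>A. l i * \<alpha> i) + (\<Sum>j\<in>B. \<mu> j * \<alpha> j)"

lemma PQ_disj: "PP \<inter> QQ = {}" by auto
lemma PP_ne: "PP \<noteq> {}" using k1 by auto
lemma PQ_un: "PP \<union> QQ = {1..m}" using k1 km by auto

lemma polyR_in: "x \<in> DD \<Longrightarrow> RR x = ereal (Rv x)"
  by (simp add: polyR_def DD_def Rv_def ff_def)
lemma polyR_out: "x \<notin> DD \<Longrightarrow> RR x = \<infinity>"
  by (auto simp add: polyR_def DD_def ff_def)
lemma edom_eq: "edom RR = DD"
proof (intro set_eqI)
  fix x show "x \<in> edom RR \<longleftrightarrow> x \<in> DD"
    by (cases "x \<in> DD") (auto simp: edom_def polyR_in polyR_out)
qed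

lemma Rv_ge: "i \<in> PP \<Longrightarrow> ff i x \<le> Rv x"
  unfolding Rv_def by (rule Max_ge) auto
lemma Rv_ex: "\<exists>i\<in>PP. ff i x = Rv x"
proof -
  have "Rv x \<in> (\<lambda>i. ff i x) ` PP" unfolding Rv_def by (rule Max_in) (use PP_ne in auto)
  then show ?thesis by auto
qed
lemma Rv_eqI: "(\<And>i. i \<in> PP \<Longrightarrow> ff i x \<le> c) \<Longrightarrow> i \<in> PP \<Longrightarrow> ff i x = c \<Longrightarrow> Rv x = c"
  unfolding Rv_def by (rule Max_eqI) auto
lemma Rv_le: "(\<And>i. i \<in> PP \<Longrightarrow> ff i x \<le> c) \<Longrightarrow> Rv x \<le> c"
  using Rv_ex by metis

lemma Imax_in: "x \<in> DD \<Longrightarrow> Imax k m a \<alpha> x = {i\<in>PP. ff i x = Rv x}"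
  by (auto simp: Imax_def polyR_in ff_def)
lemma Ifeas_eq: "Ifeas k m a \<alpha> x = {j\<in>QQ. ff j x = 0}"
  by (auto simp: Ifeas_def ff_def)

lemma II_P: "x \<in> DD \<Longrightarrow> i \<in> PP \<Longrightarrow> i \<in> II x \<longleftrightarrow> ff i x = Rv x"
  by (auto simp: II_def Imax_in Ifeas_eq)
lemma II_Q: "j \<in> QQ \<Longrightarrow> j \<in> II x \<longleftrightarrow> ff j x = 0"
  by (auto simp: II_def Imax_def Ifeas_eq)
lemma II_sub: "II x \<subseteq> PP \<union> QQ"
  by (auto simp: II_def Imax_def Ifeas_def)
lemma II_sub_m: "II x \<subseteq> {1..m}"
  using II_sub PQ_un by blast
lemma II_fin: "finite (II x)"
  using II_sub by (rule finite_subset) auto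
lemma II_Pne: "x \<in> DD \<Longrightarrow> II x \<inter> PP \<noteq> {}"
  using Rv_ex[of x] II_P[of x] by blast

lemma MI_eq: "MI k m a \<alpha> K = {x\<in>DD. II x = K}"
  by (simp add: MI_def edom_eq II_def)

lemma ff_lin: "ff i (x + s *\<^sub>R d) = ff i x + s * (a i \<bullet> d)"
  by (simp add: ff_def inner_add_right)
lemma ff_conv: "ff i ((1 - t) *\<^sub>R x + t *\<^sub>R y) = (1 - t) * ff i x + t * ff i y"
  by (simp add: ff_def inner_add_right algebra_simps)

lemma decomp:
  assumes "finite A" "finite B" "sum l A = 1"
  shows "combo A B l \<mu> \<bullet> y - Rv y - cst A B l \<mu> =
    (\<Sum>i\<in>A. l i * (ff i y - Rv y)) + (\<Sum>j\<in>B. \<mu> j * ff j y)"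
proof -
  have "(\<Sum>i\<in>A. l i * (ff i y - Rv y)) = (\<Sum>i\<in>A. l i * (a i \<bullet> y)) - (\<Sum>i\<in>A. l i * \<alpha> i) - (\<Sum>i\<in>A. l i) * Rv y"
    by (simp add: ff_def algebra_simps sum_subtractf sum_distrib_right sum.distrib)
  moreover have "(\<Sum>j\<in>B. \<mu> j * ff j y) = (\<Sum>j\<in>B. \<mu> j * (a j \<bullet> y)) - (\<Sum>j\<in>B. \<mu> j * \<alpha> j)"
    by (simp add: ff_def algebra_simps sum_subtractf)
  moreover have "combo A B l \<mu> \<bullet> y = (\<Sum>i\<in>A. l i * (a i \<bullet> y)) + (\<Sum>j\<in>B. \<mu> j * (a j \<bullet> y))"
    by (simp add: combo_def inner_add_left inner_sum_left)
  ultimately show ?thesis using assms by (simp add: cst_def)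
qed

end



context polyf begin

lemma subdiff_R_in: "x \<in> DD \<Longrightarrow> subdiff RR x = {g. \<forall>y\<in>DD. Rv x + g \<bullet> (y - x) \<le> Rv y}"
proof -
  assume x: "x \<in> DD"
  have "RR y \<ge> ereal (Rv x) + ereal (g \<bullet> (y - x)) \<longleftrightarrow> (y \<in> DD \<longrightarrow> Rv x + g \<bullet> (y - x) \<le> Rv y)" for g y
    by (cases "y \<in> DD") (auto simp: polyR_in polyR_out)
  then show ?thesis using x by (auto simp: subdiff_def polyR_in)
qed

lemma subdiff_R_out: "x \<notin> DD \<Longrightarrow> subdiff RR x = {}"
  by (simp add: subdiff_def polyR_out)

lemma fconj_ge: "y \<in> DD \<Longrightarrow> ereal (v \<bullet> y - Rv y) \<le> fconj RR v"
  unfolding fconj_def by (rule SUP_upper2[of y]) (auto simp: polyR_in)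

lemma fconj_le: "(\<And>y. y \<in> DD \<Longrightarrow> v \<bullet> y - Rv y \<le> c) \<Longrightarrow> fconj RR v \<le> ereal c"
  unfolding fconj_def
proof (rule SUP_least)
  fix y assume H: "\<And>y. y \<in> DD \<Longrightarrow> v \<bullet> y - Rv y \<le> c"
  show "ereal (v \<bullet> y) - RR y \<le> ereal c"
    by (cases "y \<in> DD") (auto simp: polyR_in polyR_out H)
qed

lemma CC_idx: "CC K = {combo (K \<inter> PP) (K \<inter> QQ) l \<mu> | l \<mu>.
   (\<forall>i\<in>K \<inter> PP. 0 \<le> l i) \<and> sum l (K \<inter> PP) = 1 \<and> (\<forall>j\<in>K \<inter> QQ. 0 \<le> \<mu> j)}"
  unfolding CC_def set_plus_def combo_def
  by (subst conv_idx, simp, subst cone_idx, simp) blast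

lemma MIs_idx: "MIs k m a K = {combo (K \<inter> PP) (K \<inter> QQ) l \<mu> | l \<mu>.
   (\<forall>i\<in>K \<inter> PP. 0 < l i) \<and> sum l (K \<inter> PP) = 1 \<and> (\<forall>j\<in>K \<inter> QQ. 0 < \<mu> j)}"
proof (cases "K \<inter> PP = {}")
  case True
  then show ?thesis by (simp add: MIs_def)
next
  case False
  show ?thesis unfolding MIs_def combo_def
    by (subst ri_conv_idx, simp, fact False, subst ri_cone_idx, simp) blast
qed

lemma convex_CC: "convex (CC K)"
  unfolding CC_def ccone_eq by (intro convex_set_plus convex_convex_hull convex_convex_cone_hull)

lemma closed_CC: "closed (CC K)"
proof -
  have "CC K = (\<Union>x\<in> ccone (a ` (K \<inter> QQ)). \<Union>y \<in> convex hull (a ` (K \<inter> PP)). {x + y})"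
    unfolding CC_def set_plus_def
  proof (intro set_eqI iffI)
    fix c assume "c \<in> {c. \<exists>aa\<in>convex hull a ` (K \<inter> PP). \<exists>b\<in>ccone (a ` (K \<inter> QQ)). c = aa + b}"
    then obtain x y where "x \<in> convex hull a ` (K \<inter> PP)" "y \<in> ccone (a ` (K \<inter> QQ))" "c = y + x"
      by (auto simp: add.commute)
    then show "c \<in> (\<Union>x\<in> ccone (a ` (K \<inter> QQ)). \<Union>y \<in> convex hull (a ` (K \<inter> PP)). {x + y})" by blast
  next
    fix c assume "c \<in> (\<Union>x\<in> ccone (a ` (K \<inter> QQ)). \<Union>y \<in> convex hull (a ` (K \<inter> PP)). {x + y})"
    then obtain x y where "x \<in> convex hull a ` (K \<inter> PP)" "y \<in> ccone (a ` (K \<inter> QQ))" "c = x + y"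
      by (auto simp: add.commute)
    then show "c \<in> {c. \<exists>aa\<in>convex hull a ` (K \<inter> PP). \<exists>b\<in>ccone (a ` (K \<inter> QQ)). c = aa + b}" by blast
  qed
  also have "closed \<dots>"
    unfolding ccone_eq
    by (intro closed_compact_sums closed_convex_cone_hull compact_convex_hull finite_imp_compact) auto
  finally show ?thesis .
qed

lemma ri_CC: "rel_interior (CC K) = MIs k m a K"
  unfolding CC_def MIs_def ccone_eq
  by (subst rel_interior_sum) (auto simp: set_plus_def convex_convex_cone_hull)

lemma CC_ne: "K \<inter> PP \<noteq> {} \<Longrightarrow> CC K \<noteq> {}"
proof -
  assume "K \<inter> PP \<noteq> {}"
  then obtain i where "i \<in> K \<inter> PP" by blast
  then have "a i + 0 \<in> CC K"
    unfolding CC_def ccone_eq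
    by (intro set_plus_intro hull_inc convex_cone_hull_contains_0) auto
  then show ?thesis by blast
qed

lemma MIs_ne: "K \<inter> PP \<noteq> {} \<Longrightarrow> MIs k m a K \<noteq> {}"
proof -
  assume "K \<inter> PP \<noteq> {}"
  then have "CC K \<noteq> {}" by (rule CC_ne)
  then have "rel_interior (CC K) \<noteq> {}" using rel_interior_eq_empty[OF convex_CC] by blast
  then show ?thesis using ri_CC by simp
qed

lemma closure_MIs: "closure (MIs k m a K) = CC K"
  using ri_CC[of K] convex_closure_rel_interior[OF convex_CC] closed_CC closure_closed by metis

lemma MIs_sub_CC: "MIs k m a K \<subseteq> CC K"
  using ri_CC rel_interior_subset by blast

lemma CC_mono: "J \<subseteq> K \<Longrightarrow> CC J \<subseteq> CC K"
  unfolding CC_def set_plus_def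
  by (auto, metis (no_types, lifting) Int_mono hull_mono image_mono order_refl subsetD ccone_def)

end



lemma small_ev: "(\<delta>::real) > 0 \<Longrightarrow> \<forall>\<^sub>F s in at_right 0. s * c < \<delta>"
proof -
  assume "\<delta> > 0"
  have "((\<lambda>s. s * c) \<longlongrightarrow> 0 * c) (at_right (0::real))"
    by (intro tendsto_intros)
  then show ?thesis using \<open>\<delta> > 0\<close> by (intro order_tendstoD(2)) auto
qed

context polyf begin

lemma dir:
  assumes z: "z \<in> DD" and d: "\<forall>j\<in>QQ \<inter> II z. a j \<bullet> d \<le> 0"
  obtains s M where "s > 0" "z + s *\<^sub>R d \<in> DD" "Rv (z + s *\<^sub>R d) = Rv z + s * M"
    "\<forall>i\<in>PP \<inter> II z. a i \<bullet> d \<le> M" "\<exists>i\<in>PP \<inter> II z. a i \<bullet> d = M"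
proof -
  define M where "M = Max ((\<lambda>i. a i \<bullet> d) ` (PP \<inter> II z))"
  have ne: "PP \<inter> II z \<noteq> {}" using II_Pne[OF z] by blast
  have M1: "\<forall>i\<in>PP \<inter> II z. a i \<bullet> d \<le> M" unfolding M_def by (auto intro: Max_ge)
  have "M \<in> (\<lambda>i. a i \<bullet> d) ` (PP \<inter> II z)" unfolding M_def by (rule Max_in) (use ne in auto)
  then have M2: "\<exists>i\<in>PP \<inter> II z. a i \<bullet> d = M" by auto
  have ev1: "\<forall>\<^sub>F s in at_right 0. \<forall>i\<in>PP - II z. s * (a i \<bullet> d - M) < Rv z - ff i z"
  proof (rule eventually_ball_finite)
    show "\<forall>i\<in>PP - II z. \<forall>\<^sub>F s in at_right 0. s * (a i \<bullet> d - M) < Rv z - ff i z"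
    proof
      fix i assume i: "i \<in> PP - II z"
      then have "ff i z < Rv z" using Rv_ge[of i z] II_P[OF z, of i] by auto
      then show "\<forall>\<^sub>F s in at_right 0. s * (a i \<bullet> d - M) < Rv z - ff i z" by (intro small_ev) auto
    qed
  qed auto
  have ev2: "\<forall>\<^sub>F s in at_right 0. \<forall>j\<in>QQ - II z. s * (a j \<bullet> d) < - ff j z"
  proof (rule eventually_ball_finite)
    show "\<forall>j\<in>QQ - II z. \<forall>\<^sub>F s in at_right 0. s * (a j \<bullet> d) < - ff j z"
    proof
      fix j assume j: "j \<in> QQ - II z"
      then have "ff j z \<le> 0" "ff j z \<noteq> 0" using z II_Q[of j z] by (auto simp: DD_def)
      then have "ff j z < 0" by linarith
      then show "\<forall>\<^sub>F s in at_right 0. s * (a j \<bullet> d) < - ff j z" by (intro small_ev) auto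
    qed
  qed auto
  have "\<forall>\<^sub>F s in at_right 0. 0 < s \<and> (\<forall>i\<in>PP - II z. s * (a i \<bullet> d - M) < Rv z - ff i z) \<and>
     (\<forall>j\<in>QQ - II z. s * (a j \<bullet> d) < - ff j z)"
    using eventually_at_right_less[of 0] ev1 ev2 by eventually_elim auto
  then obtain s where s: "0 < s" "\<forall>i\<in>PP - II z. s * (a i \<bullet> d - M) < Rv z - ff i z"
    "\<forall>j\<in>QQ - II z. s * (a j \<bullet> d) < - ff j z"
    using eventually_happens'[OF trivial_limit_at_right_real] by blast
  have inD: "z + s *\<^sub>R d \<in> DD"
    unfolding DD_def
  proof (intro CollectI ballI)
    fix j assume j: "j \<in> QQ"
    show "ff j (z + s *\<^sub>R d) \<le> 0"
    proof (cases "j \<in> II z")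
      case True
      then have "ff j z = 0" using II_Q j by blast
      moreover have "s * (a j \<bullet> d) \<le> 0" using d True j s(1) by (simp add: mult_nonneg_nonpos)
      ultimately show ?thesis by (simp add: ff_lin)
    next
      case False
      then have "s * (a j \<bullet> d) < - ff j z" using s(3) j by blast
      then show ?thesis by (simp add: ff_lin)
    qed
  qed
  have "Rv (z + s *\<^sub>R d) = Rv z + s * M"
  proof -
    obtain i0 where i0: "i0 \<in> PP \<inter> II z" "a i0 \<bullet> d = M" using M2 by blast
    show ?thesis
    proof (rule Rv_eqI)
      fix i assume i: "i \<in> PP"
      show "ff i (z + s *\<^sub>R d) \<le> Rv z + s * M"
      proof (cases "i \<in> II z")
        case True
        then have "ff i z = Rv z" using II_P[OF z i] by blast
        moreover have "s * (a i \<bullet> d) \<le> s * M" using M1 True i s(1) by (simp add: mult_left_mono)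
        ultimately show ?thesis by (simp add: ff_lin)
      next
        case False
        then have "s * (a i \<bullet> d - M) < Rv z - ff i z" using s(2) i by blast
        then show ?thesis by (simp add: ff_lin algebra_simps)
      qed
    next
      show "i0 \<in> PP" using i0 by blast
      show "ff i0 (z + s *\<^sub>R d) = Rv z + s * M"
        using i0 II_P[OF z, of i0] by (simp add: ff_lin)
    qed
  qed
  then show ?thesis using that s(1) inD M1 M2 by blast
qed

lemma decomp_le:
  assumes y: "y \<in> DD" and A: "A \<subseteq> PP" and B: "B \<subseteq> QQ" and l: "\<forall>i\<in>A. 0 \<le> l i" "sum l A = 1"
    and \<mu>: "\<forall>j\<in>B. 0 \<le> \<mu> j"
  shows "combo A B l \<mu> \<bullet> y - Rv y \<le> cst A B l \<mu>"
proof -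
  have fin: "finite A" "finite B" using A B finite_subset by auto
  have "(\<Sum>i\<in>A. l i * (ff i y - Rv y)) \<le> 0"
    using A l Rv_ge by (intro sum_nonpos) (simp add: mult_nonneg_nonpos subset_iff)
  moreover have "(\<Sum>j\<in>B. \<mu> j * ff j y) \<le> 0"
    using B \<mu> y by (intro sum_nonpos) (auto simp: mult_nonneg_nonpos DD_def subset_iff)
  ultimately show ?thesis using decomp[OF fin l(2), of \<mu> y] by simp
qed

lemma decomp_eq:
  assumes y: "y \<in> DD" and A: "A \<subseteq> PP \<inter> II y" and B: "B \<subseteq> QQ \<inter> II y" and l: "sum l A = 1"
  shows "combo A B l \<mu> \<bullet> y - Rv y = cst A B l \<mu>"
proof -
  have fin: "finite A" "finite B" using A B finite_subset by auto
  have "(\<Sum>i\<in>A. l i * (ff i y - Rv y)) = 0"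
    using A II_P[OF y] by (intro sum.neutral) (auto simp: subset_iff)
  moreover have "(\<Sum>j\<in>B. \<mu> j * ff j y) = 0"
    using B II_Q by (intro sum.neutral) (auto simp: subset_iff)
  ultimately show ?thesis using decomp[OF fin l, of \<mu> y] by simp
qed

lemma decomp_iff:
  assumes y: "y \<in> DD" and A: "A \<subseteq> PP" and B: "B \<subseteq> QQ" and l: "\<forall>i\<in>A. 0 < l i" "sum l A = 1"
    and \<mu>: "\<forall>j\<in>B. 0 < \<mu> j"
  shows "combo A B l \<mu> \<bullet> y - Rv y = cst A B l \<mu> \<longleftrightarrow> A \<union> B \<subseteq> II y"
proof
  assume "A \<union> B \<subseteq> II y"
  then show "combo A B l \<mu> \<bullet> y - Rv y = cst A B l \<mu>"
    using A B by (intro decomp_eq[OF y _ _ l(2)]) auto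
next
  assume eq: "combo A B l \<mu> \<bullet> y - Rv y = cst A B l \<mu>"
  have fin: "finite A" "finite B" using A B finite_subset by auto
  have s1: "(\<Sum>i\<in>A. l i * (ff i y - Rv y)) \<le> 0"
    using A l Rv_ge by (intro sum_nonpos) (simp add: mult_nonneg_nonpos subset_iff less_imp_le)
  have s2: "(\<Sum>j\<in>B. \<mu> j * ff j y) \<le> 0"
    using B \<mu> y by (intro sum_nonpos) (auto simp: mult_nonneg_nonpos DD_def subset_iff less_imp_le)
  have tot: "(\<Sum>i\<in>A. l i * (ff i y - Rv y)) + (\<Sum>j\<in>B. \<mu> j * ff j y) = 0"
    using decomp[OF fin l(2), of \<mu> y] eq by simp
  have "(\<Sum>i\<in>A. - (l i * (ff i y - Rv y))) = 0"
    using s1 s2 tot by (simp add: sum_negf)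
  then have z1: "\<forall>i\<in>A. - (l i * (ff i y - Rv y)) = 0"
    using fin A l Rv_ge
    by (subst sum_nonneg_eq_0_iff[symmetric]) (auto simp: mult_nonneg_nonpos subset_iff less_imp_le)
  have "(\<Sum>j\<in>B. - (\<mu> j * ff j y)) = 0"
    using s1 s2 tot by (simp add: sum_negf)
  then have z2: "\<forall>j\<in>B. - (\<mu> j * ff j y) = 0"
    using fin B \<mu> y
    by (subst sum_nonneg_eq_0_iff[symmetric]) (auto simp: mult_nonneg_nonpos subset_iff less_imp_le DD_def)
  show "A \<union> B \<subseteq> II y"
  proof
    fix i assume "i \<in> A \<union> B"
    then show "i \<in> II y"
    proof
      assume i: "i \<in> A"
      then have "ff i y = Rv y" using z1 l(1) by (metis less_irrefl mult_eq_0_iff neg_equal_0_iff_equal right_minus_eq)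
      then show ?thesis using II_P[OF y] A i by auto
    next
      assume j: "i \<in> B"
      then have "ff i y = 0" using z2 \<mu> by (metis less_irrefl mult_eq_0_iff neg_equal_0_iff_equal)
      then show ?thesis using II_Q B j by auto
    qed
  qed
qed

end



context polyf begin

lemma CC_gen: "i \<in> K \<inter> PP \<Longrightarrow> a i \<in> CC K"
proof -
  assume "i \<in> K \<inter> PP"
  then have "a i + 0 \<in> CC K"
    unfolding CC_def ccone_eq
    by (intro set_plus_intro hull_inc convex_cone_hull_contains_0) auto
  then show ?thesis by simp
qed

lemma CC_ray: "i0 \<in> K \<inter> PP \<Longrightarrow> j \<in> K \<inter> QQ \<Longrightarrow> 0 \<le> t \<Longrightarrow> a i0 + t *\<^sub>R a j \<in> CC K"
  unfolding CC_def ccone_eq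
  by (intro set_plus_intro hull_inc convex_cone_hull_mul) auto

lemma cone_dir:
  assumes i0: "i0 \<in> K \<inter> PP" and j: "j \<in> K \<inter> QQ" and H: "\<forall>c\<in>CC K. d \<bullet> c \<le> \<beta>"
  shows "a j \<bullet> d \<le> 0"
proof (rule ccontr)
  assume "\<not> a j \<bullet> d \<le> 0"
  then have pos: "a j \<bullet> d > 0" by simp
  define t where "t = (\<bar>\<beta> - d \<bullet> a i0\<bar> + 1) / (a j \<bullet> d)"
  have t0: "0 \<le> t" using pos by (simp add: t_def)
  have "d \<bullet> (a i0 + t *\<^sub>R a j) \<le> \<beta>" using H CC_ray[OF i0 j t0] by blast
  moreover have "d \<bullet> (a i0 + t *\<^sub>R a j) = d \<bullet> a i0 + \<bar>\<beta> - d \<bullet> a i0\<bar> + 1"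
    using pos by (simp add: t_def inner_add_right inner_commute)
  ultimately show False by linarith
qed

lemma subdiff_R_eq:
  assumes x: "x \<in> DD" shows "subdiff RR x = CC (II x)"
proof
  show "CC (II x) \<subseteq> subdiff RR x"
  proof
    fix g assume "g \<in> CC (II x)"
    then obtain l \<mu> where g: "g = combo (II x \<inter> PP) (II x \<inter> QQ) l \<mu>" "\<forall>i\<in>II x \<inter> PP. 0 \<le> l i"
      "sum l (II x \<inter> PP) = 1" "\<forall>j\<in>II x \<inter> QQ. 0 \<le> \<mu> j"
      by (auto simp: CC_idx)
    have "\<forall>y\<in>DD. Rv x + g \<bullet> (y - x) \<le> Rv y"
    proof
      fix y assume y: "y \<in> DD"
      have "g \<bullet> y - Rv y \<le> cst (II x \<inter> PP) (II x \<inter> QQ) l \<mu>"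
        using decomp_le[OF y _ _ g(2,3,4)] g(1) by auto
      moreover have "g \<bullet> x - Rv x = cst (II x \<inter> PP) (II x \<inter> QQ) l \<mu>"
        using decomp_eq[OF x _ _ g(3)] g(1) by auto
      ultimately show "Rv x + g \<bullet> (y - x) \<le> Rv y" by (simp add: inner_diff_right)
    qed
    then show "g \<in> subdiff RR x" using subdiff_R_in[OF x] by simp
  qed
  show "subdiff RR x \<subseteq> CC (II x)"
  proof
    fix g assume g: "g \<in> subdiff RR x"
    show "g \<in> CC (II x)"
    proof (rule ccontr)
      assume gn: "g \<notin> CC (II x)"
      obtain d0 b where db: "d0 \<bullet> g < b" "\<forall>c\<in>CC (II x). d0 \<bullet> c > b"
        using separating_hyperplane_closed_point[OF convex_CC closed_CC gn] by blast
      define d where "d = - d0"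
      have dc: "\<forall>c\<in>CC (II x). d \<bullet> c \<le> - b" using db(2) by (auto simp: d_def less_imp_le)
      obtain i0 where i0: "i0 \<in> II x \<inter> PP" using II_Pne[OF x] by blast
      have "\<forall>j\<in>QQ \<inter> II x. a j \<bullet> d \<le> 0" using cone_dir[OF i0 _ dc] by blast
      then obtain s M where sM: "s > 0" "x + s *\<^sub>R d \<in> DD" "Rv (x + s *\<^sub>R d) = Rv x + s * M"
        "\<exists>i\<in>PP \<inter> II x. a i \<bullet> d = M"
        using dir[OF x] by metis
      obtain i where i: "i \<in> PP \<inter> II x" "a i \<bullet> d = M" using sM(4) by blast
      have "d0 \<bullet> a i > b" using db(2) CC_gen[of i "II x"] i by auto
      then have "M < - b" using i(2) by (simp add: d_def inner_commute)
      moreover have "- b < g \<bullet> d" using db(1) by (simp add: d_def inner_commute)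
      moreover have "Rv x + g \<bullet> ((x + s *\<^sub>R d) - x) \<le> Rv (x + s *\<^sub>R d)"
        using g subdiff_R_in[OF x] sM(2) by auto
      then have "s * (g \<bullet> d) \<le> s * M" using sM(3) by simp
      then have "g \<bullet> d \<le> M" using sM(1) by simp
      ultimately show False by linarith
    qed
  qed
qed

lemma subdiff_conj:
  assumes v: "v \<in> subdiff RR x"
  shows "x \<in> DD" "fconj RR v = ereal (v \<bullet> x - Rv x)" "x \<in> subdiff (fconj RR) v"
proof -
  show x: "x \<in> DD" using v subdiff_R_out by blast
  have le: "v \<bullet> y - Rv y \<le> v \<bullet> x - Rv x" if "y \<in> DD" for y
    using v subdiff_R_in[OF x] that by (auto simp: inner_diff_right algebra_simps)
  show fc: "fconj RR v = ereal (v \<bullet> x - Rv x)"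
    by (rule antisym) (use fconj_le le fconj_ge x in auto)
  have "fconj RR w \<ge> ereal (v \<bullet> x - Rv x) + ereal (x \<bullet> (w - v))" for w
  proof -
    have e: "v \<bullet> x - Rv x + x \<bullet> (w - v) = w \<bullet> x - Rv x"
      by (simp add: inner_diff_right inner_commute)
    show ?thesis using fconj_ge[OF x, of w] by (simp add: e)
  qed
  then show "x \<in> subdiff (fconj RR) v" unfolding subdiff_def fc by simp
qed

lemma conj_combo:
  assumes x0: "x0 \<in> DD" and A: "A \<subseteq> PP" and B: "B \<subseteq> QQ" and AB: "A \<union> B \<subseteq> II x0"
    and l: "\<forall>i\<in>A. 0 < l i" "sum l A = 1" and \<mu>: "\<forall>j\<in>B. 0 < \<mu> j"
  shows "fconj RR (combo A B l \<mu>) = ereal (cst A B l \<mu>)"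
    "subdiff (fconj RR) (combo A B l \<mu>) = FF (A \<union> B)"
proof -
  define v where "v = combo A B l \<mu>"
  define c where "c = cst A B l \<mu>"
  have l0: "\<forall>i\<in>A. 0 \<le> l i" and \<mu>0: "\<forall>j\<in>B. 0 \<le> \<mu> j" using l \<mu> by (auto simp: less_imp_le)
  have le: "v \<bullet> y - Rv y \<le> c" if "y \<in> DD" for y
    using decomp_le[OF that A B l0 l(2) \<mu>0] by (simp add: v_def c_def)
  have iff: "v \<bullet> y - Rv y = c \<longleftrightarrow> A \<union> B \<subseteq> II y" if "y \<in> DD" for y
    using decomp_iff[OF that A B l \<mu>] by (simp add: v_def c_def)
  have eq0: "v \<bullet> x0 - Rv x0 = c" using iff[OF x0] AB by simp
  have fc: "fconj RR v = ereal c"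
    by (rule antisym) (use fconj_le le fconj_ge[OF x0, of v] eq0 in auto)
  then show "fconj RR (combo A B l \<mu>) = ereal (cst A B l \<mu>)" by (simp add: v_def c_def)
  have sd: "subdiff (fconj RR) v = {g. \<forall>w. fconj RR w \<ge> ereal c + ereal (g \<bullet> (w - v))}"
    unfolding subdiff_def fc by simp
  have "subdiff (fconj RR) v = FF (A \<union> B)"
  proof
    show "FF (A \<union> B) \<subseteq> subdiff (fconj RR) v"
    proof
      fix y assume "y \<in> FF (A \<union> B)"
      then have y: "y \<in> DD" "A \<union> B \<subseteq> II y" by (auto simp: FF_def)
      then have yc: "v \<bullet> y - Rv y = c" using iff by blast
      have "fconj RR w \<ge> ereal c + ereal (y \<bullet> (w - v))" for w
      proof -
        have "ereal c + ereal (y \<bullet> (w - v)) = ereal (w \<bullet> y - Rv y)"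
          using yc by (simp add: inner_diff_right inner_commute)
        then show ?thesis using fconj_ge[OF y(1), of w] by simp
      qed
      then show "y \<in> subdiff (fconj RR) v" using sd by simp
    qed
    show "subdiff (fconj RR) v \<subseteq> FF (A \<union> B)"
    proof
      fix g assume "g \<in> subdiff (fconj RR) v"
      then have g: "\<And>w. fconj RR w \<ge> ereal c + ereal (g \<bullet> (w - v))" using sd by simp
      have gD: "g \<in> DD"
        unfolding DD_def
      proof (intro CollectI ballI)
        fix j assume j: "j \<in> QQ"
        have "fconj RR (v + a j) \<le> ereal (c + \<alpha> j)"
        proof (rule fconj_le)
          fix y assume y: "y \<in> DD"
          have "ff j y \<le> 0" using y j by (simp add: DD_def)
          then show "(v + a j) \<bullet> y - Rv y \<le> c + \<alpha> j"
            using le[OF y] by (simp add: inner_add_left ff_def)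
        qed
        with g[of "v + a j"] have "ereal c + ereal (g \<bullet> ((v + a j) - v)) \<le> ereal (c + \<alpha> j)"
          by (rule order_trans)
        then show "ff j g \<le> 0" by (simp add: ff_def inner_commute)
      qed
      have "Rv g \<le> g \<bullet> v - c"
      proof (rule Rv_le)
        fix i assume i: "i \<in> PP"
        have "fconj RR (a i) \<le> ereal (\<alpha> i)"
        proof (rule fconj_le)
          fix y assume "y \<in> DD"
          show "a i \<bullet> y - Rv y \<le> \<alpha> i" using Rv_ge[OF i, of y] by (simp add: ff_def)
        qed
        with g[of "a i"] have "ereal c + ereal (g \<bullet> (a i - v)) \<le> ereal (\<alpha> i)"
          by (rule order_trans)
        then show "ff i g \<le> g \<bullet> v - c" by (simp add: ff_def inner_commute inner_diff_right)
      qed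
      then have "v \<bullet> g - Rv g = c" using le[OF gD] by (simp add: inner_commute)
      then show "g \<in> FF (A \<union> B)" using iff[OF gD] gD by (simp add: FF_def)
    qed
  qed
  then show "subdiff (fconj RR) (combo A B l \<mu>) = FF (A \<union> B)" by (simp add: v_def)
qed

end



context polyf begin

lemma ff_aff: "u + v = 1 \<Longrightarrow> ff i (u *\<^sub>R x + v *\<^sub>R y) = u * ff i x + v * ff i y"
proof -
  assume uv: "u + v = 1"
  have "u * \<alpha> i + v * \<alpha> i = \<alpha> i" using uv by (metis distrib_right mult_1)
  then show ?thesis unfolding ff_def inner_add_right inner_scaleR_right by (simp add: algebra_simps)
qed

lemma cont_ff: "continuous_on UNIV (ff i)"
  unfolding ff_def by (intro continuous_intros)

lemma closed_conv_Collect: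
  fixes b :: "'i \<Rightarrow> 'a" and \<beta> :: "'i \<Rightarrow> real"
  shows "closed {y. \<forall>j\<in>A. b j \<bullet> y \<le> \<beta> j} \<and> convex {y. \<forall>j\<in>A. b j \<bullet> y \<le> \<beta> j}"
proof -
  have e: "{y. \<forall>j\<in>A. b j \<bullet> y \<le> \<beta> j} = (\<Inter>j\<in>A. {y. b j \<bullet> y \<le> \<beta> j})" by auto
  show ?thesis unfolding e
    by (intro conjI closed_INT convex_INT ballI closed_halfspace_le convex_halfspace_le)
qed

lemma FF_repr:
  assumes K: "K \<subseteq> PP \<union> QQ"
  shows "FF K = {y. \<forall>j\<in>QQ. a j \<bullet> y \<le> \<alpha> j} \<inter> {y. \<forall>j\<in>K \<inter> QQ. (- a j) \<bullet> y \<le> - \<alpha> j}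
     \<inter> {y. \<forall>p\<in>(K \<inter> PP) \<times> PP. (a (snd p) - a (fst p)) \<bullet> y \<le> \<alpha> (snd p) - \<alpha> (fst p)}"
proof (intro set_eqI iffI)
  fix y assume "y \<in> FF K"
  then have y: "y \<in> DD" "K \<subseteq> II y" by (auto simp: FF_def)
  have "\<forall>j\<in>QQ. a j \<bullet> y \<le> \<alpha> j" using y(1) by (auto simp: DD_def ff_def)
  moreover have "\<forall>j\<in>K \<inter> QQ. (- a j) \<bullet> y \<le> - \<alpha> j" using y II_Q by (force simp: ff_def)
  moreover have "\<forall>p\<in>(K \<inter> PP) \<times> PP. (a (snd p) - a (fst p)) \<bullet> y \<le> \<alpha> (snd p) - \<alpha> (fst p)"
  proof
    fix p assume p: "p \<in> (K \<inter> PP) \<times> PP"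
    then have "ff (fst p) y = Rv y" using y II_P[OF y(1)] by auto
    moreover have "ff (snd p) y \<le> Rv y" using p Rv_ge by auto
    ultimately show "(a (snd p) - a (fst p)) \<bullet> y \<le> \<alpha> (snd p) - \<alpha> (fst p)"
      by (simp add: ff_def inner_diff_left)
  qed
  ultimately show "y \<in> {y. \<forall>j\<in>QQ. a j \<bullet> y \<le> \<alpha> j} \<inter> {y. \<forall>j\<in>K \<inter> QQ. (- a j) \<bullet> y \<le> - \<alpha> j}
     \<inter> {y. \<forall>p\<in>(K \<inter> PP) \<times> PP. (a (snd p) - a (fst p)) \<bullet> y \<le> \<alpha> (snd p) - \<alpha> (fst p)}" by blast
next
  fix y assume "y \<in> {y. \<forall>j\<in>QQ. a j \<bullet> y \<le> \<alpha> j} \<inter> {y. \<forall>j\<in>K \<inter> QQ. (- a j) \<bullet> y \<le> - \<alpha> j}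
     \<inter> {y. \<forall>p\<in>(K \<inter> PP) \<times> PP. (a (snd p) - a (fst p)) \<bullet> y \<le> \<alpha> (snd p) - \<alpha> (fst p)}"
  then have h1: "\<forall>j\<in>QQ. a j \<bullet> y \<le> \<alpha> j" and h2: "\<forall>j\<in>K \<inter> QQ. (- a j) \<bullet> y \<le> - \<alpha> j"
    and h3: "\<forall>i\<in>K \<inter> PP. \<forall>l\<in>PP. (a l - a i) \<bullet> y \<le> \<alpha> l - \<alpha> i" by auto
  have yD: "y \<in> DD" using h1 by (auto simp: DD_def ff_def)
  have "K \<subseteq> II y"
  proof
    fix i assume i: "i \<in> K"
    show "i \<in> II y"
    proof (cases "i \<in> PP")
      case True
      have "Rv y = ff i y"
      proof (rule Rv_eqI)
        fix l
        assume l: "l \<in> PP"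
        have "(a l - a i) \<bullet> y \<le> \<alpha> l - \<alpha> i" using h3 i True l by blast
        then show "ff l y \<le> ff i y" unfolding ff_def inner_diff_left by linarith
      qed (use True in auto)
      then show ?thesis using II_P[OF yD True] by simp
    next
      case False
      then have "i \<in> QQ" using K i by auto
      then have "ff i y = 0" using h1 h2 i by (force simp: ff_def)
      then show ?thesis using II_Q \<open>i \<in> QQ\<close> by blast
    qed
  qed
  then show "y \<in> FF K" using yD by (simp add: FF_def)
qed

lemma closed_convex_FF:
  assumes K: "K \<subseteq> PP \<union> QQ"
  shows "closed (FF K)" "convex (FF K)"
  unfolding FF_repr[OF K]
  using closed_conv_Collect[of QQ a \<alpha>] closed_conv_Collect[of "K \<inter> QQ" "\<lambda>j. - a j" "\<lambda>j. - \<alpha> j"]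
    closed_conv_Collect[of "(K \<inter> PP) \<times> PP" "\<lambda>p. a (snd p) - a (fst p)" "\<lambda>p. \<alpha> (snd p) - \<alpha> (fst p)"]
  by (meson closed_Int convex_Int)+

lemma ri_FF:
  assumes x0: "x0 \<in> DD" and K: "K = II x0"
  shows "rel_interior (FF K) = MI k m a \<alpha> K"
proof -
  obtain i0 where i0: "i0 \<in> K \<inter> PP" using II_Pne[OF x0] K by blast
  have Ksub: "K \<subseteq> PP \<union> QQ" using K II_sub by blast
  have x0F: "x0 \<in> FF K" using x0 K by (simp add: FF_def)
  define L where "L = {y. (\<forall>i\<in>K \<inter> PP. ff i y = ff i0 y) \<and> (\<forall>j\<in>K \<inter> QQ. ff j y = 0)}"
  define U where "U = {y. (\<forall>i\<in>PP - K. ff i y < ff i0 y) \<and> (\<forall>j\<in>QQ - K. ff j y < 0)}"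
  have affL: "affine L"
    unfolding affine_def
  proof (intro ballI allI impI)
    fix x y and u v :: real assume x: "x \<in> L" and y: "y \<in> L" and uv: "u + v = 1"
    show "u *\<^sub>R x + v *\<^sub>R y \<in> L"
      unfolding L_def
    proof (intro CollectI conjI ballI)
      fix i assume "i \<in> K \<inter> PP"
      then have "ff i x = ff i0 x" "ff i y = ff i0 y" using x y by (auto simp: L_def)
      then show "ff i (u *\<^sub>R x + v *\<^sub>R y) = ff i0 (u *\<^sub>R x + v *\<^sub>R y)" by (simp add: ff_aff[OF uv])
    next
      fix j assume "j \<in> K \<inter> QQ"
      then have "ff j x = 0" "ff j y = 0" using x y by (auto simp: L_def)
      then show "ff j (u *\<^sub>R x + v *\<^sub>R y) = 0" by (simp add: ff_aff[OF uv])
    qed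
  qed
  have FL: "FF K \<subseteq> L"
  proof
    fix y assume "y \<in> FF K"
    then have y: "y \<in> DD" "K \<subseteq> II y" by (auto simp: FF_def)
    have "ff i0 y = Rv y" using i0 y II_P by blast
    then show "y \<in> L" unfolding L_def using y II_P II_Q by auto
  qed
  have affF: "affine hull (FF K) \<subseteq> L" using FL affL by (rule hull_minimal)
  have openU: "open U"
  proof -
    have "U = (\<Inter>i\<in>PP - K. {y. ff i y < ff i0 y}) \<inter> (\<Inter>j\<in>QQ - K. {y. ff j y < 0})"
      by (auto simp: U_def)
    also have "open \<dots>"
      by (intro open_Int open_INT ballI open_Collect_less cont_ff continuous_on_const) auto
    finally show ?thesis .
  qed
  have UL: "U \<inter> L \<subseteq> FF K"
  proof
    fix y assume y: "y \<in> U \<inter> L"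
    have yD: "y \<in> DD"
      unfolding DD_def
    proof (intro CollectI ballI)
      fix j
      assume jQ: "j \<in> QQ"
      have "j \<in> K \<Longrightarrow> ff j y = 0" using y jQ by (auto simp: L_def)
      moreover have "j \<notin> K \<Longrightarrow> ff j y < 0" using y jQ by (auto simp: U_def)
      ultimately show "ff j y \<le> 0" by force
    qed
    have R0: "Rv y = ff i0 y"
    proof (rule Rv_eqI)
      fix l assume lP: "l \<in> PP"
      have "l \<in> K \<Longrightarrow> ff l y = ff i0 y" using y lP by (auto simp: L_def)
      moreover have "l \<notin> K \<Longrightarrow> ff l y < ff i0 y" using y lP by (auto simp: U_def)
      ultimately show "ff l y \<le> ff i0 y" by force
    qed (use i0 in auto)
    have "K \<subseteq> II y"
    proof
      fix i assume i: "i \<in> K"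
      show "i \<in> II y"
      proof (cases "i \<in> PP")
        case True
        then show ?thesis using II_P[OF yD True] R0 y i by (auto simp: L_def)
      next
        case False
        then have "i \<in> QQ" using Ksub i by auto
        then show ?thesis using II_Q y i by (auto simp: L_def)
      qed
    qed
    then show "y \<in> FF K" using yD by (simp add: FF_def)
  qed
  show ?thesis
  proof (intro set_eqI iffI)
    fix y assume "y \<in> MI k m a \<alpha> K"
    then have y: "y \<in> DD" "II y = K" by (auto simp: MI_eq)
    have yU: "y \<in> U"
      unfolding U_def
    proof (intro CollectI conjI ballI)
      fix i assume i: "i \<in> PP - K"
      have "ff i0 y = Rv y" using i0 y II_P by blast
      moreover have "ff i y \<noteq> Rv y" using i y II_P by blast
      ultimately show "ff i y < ff i0 y" using Rv_ge[of i y] i by force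
    next
      fix j assume j: "j \<in> QQ - K"
      then have "ff j y \<noteq> 0" using y II_Q by blast
      moreover have "ff j y \<le> 0" using y j by (auto simp: DD_def)
      ultimately show "ff j y < 0" by linarith
    qed
    obtain e where e: "e > 0" "ball y e \<subseteq> U" using openU yU open_contains_ball by blast
    show "y \<in> rel_interior (FF K)"
      unfolding mem_rel_interior_ball
    proof (intro conjI exI)
      show "y \<in> FF K" using y by (simp add: FF_def)
      show "e > 0" by fact
      show "ball y e \<inter> affine hull FF K \<subseteq> FF K" using e affF UL by blast
    qed
  next
    fix y assume yri: "y \<in> rel_interior (FF K)"
    then have yF: "y \<in> FF K" using rel_interior_subset by blast
    then have y: "y \<in> DD" "K \<subseteq> II y" by (auto simp: FF_def)
    obtain e where e: "e > 0" "ball y e \<inter> affine hull FF K \<subseteq> FF K"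
      using yri mem_rel_interior_ball by blast
    have "II y \<subseteq> K"
    proof
      fix i assume iy: "i \<in> II y"
      show "i \<in> K"
      proof (rule ccontr)
        assume iK: "i \<notin> K"
        define t where "t = e / (2 * (norm (y - x0) + 1))"
        have "2 * (norm (y - x0) + 1) > 0" by (simp add: add_nonneg_pos)
        then have t0: "t > 0" using e by (simp add: t_def)
        define z where "z = (1 + t) *\<^sub>R y + (- t) *\<^sub>R x0"
        have "z \<in> affine hull FF K"
          unfolding z_def
          by (rule mem_affine[OF affine_affine_hull]) (auto intro: hull_inc yF x0F)
        moreover have "dist y z < e"
        proof -
          have "y - z = t *\<^sub>R (x0 - y)" by (simp add: z_def algebra_simps)
          then have "dist y z = t * norm (y - x0)"
            using t0 by (simp add: dist_norm norm_minus_commute)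
          also have "\<dots> < e"
          proof -
            have "t * norm (y - x0) = e * (norm (y - x0) / (2 * (norm (y - x0) + 1)))"
              by (simp add: t_def)
            also have "\<dots> < e * 1"
            proof (intro mult_strict_left_mono)
              have den: "2 * (norm (y - x0) + 1) > 0" by (simp add: add_nonneg_pos)
              show "norm (y - x0) / (2 * (norm (y - x0) + 1)) < 1"
                by (subst pos_divide_less_eq[OF den]) (simp add: add_nonneg_pos)
            qed (use e in auto)
            finally show ?thesis by simp
          qed
          finally show ?thesis .
        qed
        ultimately have zF: "z \<in> FF K" using e by (auto simp: dist_commute)
        then have zD: "z \<in> DD" "K \<subseteq> II z" by (auto simp: FF_def)
        have ffz: "ff j z = (1 + t) * ff j y - t * ff j x0" for j
          unfolding z_def by (subst ff_aff) auto
        show False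
        proof (cases "i \<in> PP")
          case True
          have "ff i y = Rv y" "ff i0 y = Rv y" using II_P[OF y(1)] iy True i0 y(2) by auto
          moreover have "ff i0 x0 = Rv x0" using II_P[OF x0] i0 K by auto
          moreover have "ff i x0 \<noteq> Rv x0" using II_P[OF x0 True] iK K by auto
          moreover have "ff i x0 \<le> Rv x0" using Rv_ge True by blast
          moreover have "ff i0 z = Rv z" using II_P[OF zD(1)] i0 zD(2) by auto
          moreover have "ff i z \<le> Rv z" using Rv_ge True by blast
          ultimately have "t * (ff i0 x0 - ff i x0) \<le> 0" using ffz[of i] ffz[of i0] by (simp add: algebra_simps)
          moreover have "t * (ff i0 x0 - ff i x0) > 0"
            using t0 \<open>ff i x0 \<noteq> Rv x0\<close> \<open>ff i x0 \<le> Rv x0\<close> \<open>ff i0 x0 = Rv x0\<close> by simp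
          ultimately show False by simp
        next
          case False
          then have iQ: "i \<in> QQ" using II_sub iy by blast
          then have "ff i y = 0" using II_Q iy by blast
          moreover have "ff i x0 \<noteq> 0" using II_Q iQ iK K by blast
          moreover have "ff i x0 \<le> 0" using x0 iQ by (auto simp: DD_def)
          moreover have "ff i z \<le> 0" using zD iQ by (auto simp: DD_def)
          ultimately have "- t * ff i x0 \<le> 0" "- t * ff i x0 > 0" using ffz[of i] t0
            by (auto simp: mult_pos_neg)
          then show False by simp
        qed
      qed
    qed
    then show "y \<in> MI k m a \<alpha> K" using y by (auto simp: MI_eq)
  qed
qed

lemma closure_MI:
  assumes x0: "x0 \<in> DD" and K: "K = II x0"
  shows "closure (MI k m a \<alpha> K) = FF K"
proof -
  have Ksub: "K \<subseteq> PP \<union> QQ" using K II_sub by blast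
  show ?thesis
    using ri_FF[OF x0 K] convex_closure_rel_interior[OF closed_convex_FF(2)[OF Ksub]]
      closure_closed[OF closed_convex_FF(1)[OF Ksub]] by simp
qed

end



context polyf begin

lemma inner_combo: "d \<bullet> combo A B l \<mu> = (\<Sum>i\<in>A. l i * (d \<bullet> a i)) + (\<Sum>j\<in>B. \<mu> j * (d \<bullet> a j))"
  by (simp add: combo_def inner_add_right inner_sum_right)

lemma conj_back:
  assumes fc: "fconj RR v = ereal c" and g: "g \<in> subdiff (fconj RR) v"
  shows "g \<in> DD" "v \<bullet> g - Rv g = c" "v \<in> subdiff RR g"
proof -
  have le: "v \<bullet> y - Rv y \<le> c" if "y \<in> DD" for y
    using fconj_ge[OF that, of v] fc by simp
  have g': "\<And>w. fconj RR w \<ge> ereal c + ereal (g \<bullet> (w - v))"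
    using g unfolding subdiff_def fc by (simp split: if_splits)
  show gD: "g \<in> DD"
    unfolding DD_def
  proof (intro CollectI ballI)
    fix j assume j: "j \<in> QQ"
    have "fconj RR (v + a j) \<le> ereal (c + \<alpha> j)"
    proof (rule fconj_le)
      fix y assume y: "y \<in> DD"
      have "ff j y \<le> 0" using y j by (simp add: DD_def)
      then show "(v + a j) \<bullet> y - Rv y \<le> c + \<alpha> j"
        using le[OF y] by (simp add: inner_add_left ff_def)
    qed
    with g'[of "v + a j"] have "ereal c + ereal (g \<bullet> ((v + a j) - v)) \<le> ereal (c + \<alpha> j)"
      by (rule order_trans)
    then show "ff j g \<le> 0" by (simp add: ff_def inner_commute)
  qed
  have "Rv g \<le> g \<bullet> v - c"
  proof (rule Rv_le)
    fix i assume i: "i \<in> PP"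
    have "fconj RR (a i) \<le> ereal (\<alpha> i)"
    proof (rule fconj_le)
      fix y assume "y \<in> DD"
      show "a i \<bullet> y - Rv y \<le> \<alpha> i" using Rv_ge[OF i, of y] by (simp add: ff_def)
    qed
    with g'[of "a i"] have "ereal c + ereal (g \<bullet> (a i - v)) \<le> ereal (\<alpha> i)"
      by (rule order_trans)
    then show "ff i g \<le> g \<bullet> v - c" by (simp add: ff_def inner_commute inner_diff_right)
  qed
  then show eq: "v \<bullet> g - Rv g = c" using le[OF gD] by (simp add: inner_commute)
  have "\<forall>y\<in>DD. Rv g + v \<bullet> (y - g) \<le> Rv y"
    using le eq by (auto simp: inner_diff_right algebra_simps)
  then show "v \<in> subdiff RR g" using subdiff_R_in[OF gD] by simp
qed

lemma cover:
  assumes v: "v \<in> dom_subdiff (fconj RR)"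
  shows "\<exists>K. K \<subseteq> {1..m} \<and> MI k m a \<alpha> K \<noteq> {} \<and> v \<in> MIs k m a K"
proof -
  obtain y0 where y0: "y0 \<in> subdiff (fconj RR) v" using v by (auto simp: dom_subdiff_def)
  have "\<bar>fconj RR v\<bar> \<noteq> \<infinity>" using y0 by (auto simp: subdiff_def split: if_splits)
  then obtain c0 where c0: "fconj RR v = ereal c0" by (cases "fconj RR v") auto
  note b0 = conj_back[OF c0 y0]
  have "v \<in> CC (II y0)" using b0(3) subdiff_R_eq[OF b0(1)] by simp
  then obtain l \<mu> where lm: "v = combo (II y0 \<inter> PP) (II y0 \<inter> QQ) l \<mu>" "\<forall>i\<in>II y0 \<inter> PP. 0 \<le> l i"
      "sum l (II y0 \<inter> PP) = 1" "\<forall>j\<in>II y0 \<inter> QQ. 0 \<le> \<mu> j"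
    by (auto simp: CC_idx)
  define A where "A = {i\<in>II y0 \<inter> PP. 0 < l i}"
  define B where "B = {j\<in>II y0 \<inter> QQ. 0 < \<mu> j}"
  have finA: "finite (II y0 \<inter> PP)" "finite (II y0 \<inter> QQ)" by auto
  have sA: "sum l A = 1"
  proof -
    have "sum l (II y0 \<inter> PP) = sum l A"
      unfolding A_def using lm(2) by (intro sum.mono_neutral_right finA) (auto simp: less_le)
    then show ?thesis using lm(3) by simp
  qed
  have vAB: "v = combo A B l \<mu>"
  proof -
    have "(\<Sum>i\<in>II y0 \<inter> PP. l i *\<^sub>R a i) = (\<Sum>i\<in>A. l i *\<^sub>R a i)"
      unfolding A_def using lm(2) by (intro sum.mono_neutral_right finA) (auto simp: less_le)
    moreover have "(\<Sum>j\<in>II y0 \<inter> QQ. \<mu> j *\<^sub>R a j) = (\<Sum>j\<in>B. \<mu> j *\<^sub>R a j)"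
      unfolding B_def using lm(4) by (intro sum.mono_neutral_right finA) (auto simp: less_le)
    ultimately show ?thesis using lm(1) by (simp add: combo_def)
  qed
  have AP: "A \<subseteq> PP" and BQ: "B \<subseteq> QQ" and AB0: "A \<union> B \<subseteq> II y0"
    by (auto simp: A_def B_def)
  have lpos: "\<forall>i\<in>A. 0 < l i" and mpos: "\<forall>j\<in>B. 0 < \<mu> j" by (auto simp: A_def B_def)
  have Ane: "A \<noteq> {}" using sA by auto
  define KA where "KA = A \<union> B"
  have cc: "fconj RR v = ereal (cst A B l \<mu>)" "subdiff (fconj RR) v = FF KA"
    using conj_combo[OF b0(1) AP BQ AB0 lpos sA mpos] vAB by (simp_all add: KA_def)
  have y0F: "y0 \<in> FF KA" using y0 cc by simp
  obtain z where zF: "z \<in> FF KA" and zmin: "\<And>y. y \<in> FF KA \<Longrightarrow> card (II z) \<le> card (II y)"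
    using ex_has_least_nat[of "\<lambda>y. y \<in> FF KA" y0 "\<lambda>y. card (II y)"] y0F by blast
  have zD: "z \<in> DD" "KA \<subseteq> II z" using zF by (auto simp: FF_def)
  define K' where "K' = II z"
  have FFeq: "FF KA \<subseteq> FF K'"
  proof
    fix y assume yF: "y \<in> FF KA"
    then have yD: "y \<in> DD" "KA \<subseteq> II y" by (auto simp: FF_def)
    have "II z \<subseteq> II y"
    proof (rule ccontr)
      assume "\<not> II z \<subseteq> II y"
      then obtain i1 where i1: "i1 \<in> II z" "i1 \<notin> II y" by blast
      define p where "p = (1/2) *\<^sub>R y + (1/2) *\<^sub>R z"
      have ffp: "ff j p = (1/2) * ff j y + (1/2) * ff j z" for j
        unfolding p_def by (rule ff_aff) simp
      obtain i0 where i0: "i0 \<in> A" using Ane by blast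
      have pD: "p \<in> DD"
        unfolding DD_def
      proof (intro CollectI ballI)
        fix j assume "j \<in> QQ"
        then have "ff j y \<le> 0" "ff j z \<le> 0" using yD zD by (auto simp: DD_def)
        then show "ff j p \<le> 0" by (simp add: ffp)
      qed
      have Rp: "Rv p = (1/2) * Rv y + (1/2) * Rv z"
      proof (rule Rv_eqI)
        fix i assume "i \<in> PP"
        then show "ff i p \<le> (1/2) * Rv y + (1/2) * Rv z" using Rv_ge[of i y] Rv_ge[of i z] by (simp add: ffp)
      next
        show "i0 \<in> PP" using i0 AP by blast
        have "i0 \<in> II y" "i0 \<in> II z" "i0 \<in> PP" using yD zD i0 AP by (auto simp: KA_def)
        then have "ff i0 y = Rv y" "ff i0 z = Rv z"
          using II_P yD(1) zD(1) by auto
        then show "ff i0 p = (1/2) * Rv y + (1/2) * Rv z" by (simp add: ffp)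
      qed
      have pF: "p \<in> FF KA"
      proof -
        have "KA \<subseteq> II p"
        proof
          fix i assume i: "i \<in> KA"
          show "i \<in> II p"
          proof (cases "i \<in> PP")
            case True
            have "ff i y = Rv y" "ff i z = Rv z" using II_P yD zD i True by auto
            then show ?thesis using II_P[OF pD True] Rp by (simp add: ffp)
          next
            case False
            then have "i \<in> QQ" using i AP BQ by (auto simp: KA_def)
            then have "ff i y = 0" "ff i z = 0" using II_Q yD zD i by auto
            then show ?thesis using II_Q \<open>i \<in> QQ\<close> by (simp add: ffp)
          qed
        qed
        then show ?thesis using pD by (simp add: FF_def)
      qed
      have sub: "II p \<subseteq> II y"
      proof
        fix i assume ip: "i \<in> II p"
        show "i \<in> II y"
        proof (cases "i \<in> PP")
          case True
          have "ff i p = Rv p" using II_P[OF pD True] ip by simp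
          moreover have "ff i y \<le> Rv y" "ff i z \<le> Rv z" using Rv_ge True by auto
          ultimately have "ff i y = Rv y" using Rp by (simp add: ffp)
          then show ?thesis using II_P[OF yD(1) True] by simp
        next
          case False
          then have iQ: "i \<in> QQ" using ip II_sub by blast
          have "ff i p = 0" using II_Q iQ ip by blast
          moreover have "ff i y \<le> 0" "ff i z \<le> 0" using yD zD iQ by (auto simp: DD_def)
          ultimately have "ff i y = 0" by (simp add: ffp)
          then show ?thesis using II_Q iQ by blast
        qed
      qed
      have sub2: "II p \<subseteq> II z"
      proof
        fix i assume ip: "i \<in> II p"
        show "i \<in> II z"
        proof (cases "i \<in> PP")
          case True
          have "ff i p = Rv p" using II_P[OF pD True] ip by simp
          moreover have "ff i y \<le> Rv y" "ff i z \<le> Rv z" using Rv_ge True by auto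
          ultimately have "ff i z = Rv z" using Rp by (simp add: ffp)
          then show ?thesis using II_P[OF zD(1) True] by simp
        next
          case False
          then have iQ: "i \<in> QQ" using ip II_sub by blast
          have "ff i p = 0" using II_Q iQ ip by blast
          moreover have "ff i y \<le> 0" "ff i z \<le> 0" using yD zD iQ by (auto simp: DD_def)
          ultimately have "ff i z = 0" by (simp add: ffp)
          then show ?thesis using II_Q iQ by blast
        qed
      qed
      have "II p \<subset> II z" using sub sub2 i1 by blast
      then have "card (II p) < card (II z)" using II_fin by (rule psubset_card_mono[rotated])
      moreover have "card (II z) \<le> card (II p)" using zmin[OF pF] .
      ultimately show False by simp
    qed
    then show "y \<in> FF K'" using yD by (simp add: FF_def K'_def)
  qed
  have zsd: "z \<in> subdiff (fconj RR) v" using zF cc by simp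
  note bz = conj_back[OF c0 zsd]
  have vC: "v \<in> CC K'" using bz(3) subdiff_R_eq[OF zD(1)] by (simp add: K'_def)
  have vri: "v \<in> rel_interior (CC K')"
  proof (rule ccontr)
    assume vn: "v \<notin> rel_interior (CC K')"
    obtain d0 where d0: "\<And>y. y \<in> CC K' \<Longrightarrow> d0 \<bullet> v \<le> d0 \<bullet> y"
      "\<And>y. y \<in> rel_interior (CC K') \<Longrightarrow> d0 \<bullet> v < d0 \<bullet> y"
      using supporting_hyperplane_rel_boundary[OF convex_CC vC vn] by metis
    define d where "d = - d0"
    have dc: "\<forall>c\<in>CC K'. d \<bullet> c \<le> d \<bullet> v" using d0(1) by (simp add: d_def)
    obtain i0 where i0: "i0 \<in> K' \<inter> PP" using II_Pne[OF zD(1)] unfolding K'_def by blast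
    have "\<forall>j\<in>QQ \<inter> II z. a j \<bullet> d \<le> 0" using cone_dir[OF i0 _ dc] by (auto simp: K'_def)
    then obtain s M where sM: "s > 0" "z + s *\<^sub>R d \<in> DD" "Rv (z + s *\<^sub>R d) = Rv z + s * M"
      "\<forall>i\<in>PP \<inter> II z. a i \<bullet> d \<le> M" "\<exists>i\<in>PP \<inter> II z. a i \<bullet> d = M"
      using dir[OF zD(1)] by metis
    have "M \<le> d \<bullet> v"
    proof -
      obtain i where i: "i \<in> PP \<inter> II z" "a i \<bullet> d = M" using sM(5) by blast
      then have "d \<bullet> a i \<le> d \<bullet> v" using dc CC_gen[of i K'] by (auto simp: K'_def)
      then show ?thesis using i by (simp add: inner_commute)
    qed
    moreover have "d \<bullet> v \<le> M"
    proof -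
      have "d \<bullet> v = (\<Sum>i\<in>A. l i * (d \<bullet> a i)) + (\<Sum>j\<in>B. \<mu> j * (d \<bullet> a j))"
        using vAB inner_combo by simp
      also have "\<dots> \<le> (\<Sum>i\<in>A. l i * M) + 0"
      proof (intro add_mono sum_mono sum_nonpos)
        fix i assume "i \<in> A"
        then have "a i \<bullet> d \<le> M" using sM(4) AP zD(2) by (auto simp: KA_def)
        then show "l i * (d \<bullet> a i) \<le> l i * M"
          using lpos \<open>i \<in> A\<close> by (simp add: inner_commute mult_left_mono less_imp_le)
      next
        fix j assume "j \<in> B"
        then have "a j \<bullet> d \<le> 0" using \<open>\<forall>j\<in>QQ \<inter> II z. a j \<bullet> d \<le> 0\<close> BQ zD(2) by (auto simp: KA_def)
        then show "\<mu> j * (d \<bullet> a j) \<le> 0"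
          using mpos \<open>j \<in> B\<close> by (simp add: inner_commute mult_nonneg_nonpos less_imp_le)
      qed
      also have "\<dots> = M" using sA by (simp add: sum_distrib_right[symmetric])
      finally show ?thesis .
    qed
    ultimately have Mv: "M = d \<bullet> v" by simp
    define w where "w = z + s *\<^sub>R d"
    have wD: "w \<in> DD" using sM(2) by (simp add: w_def)
    have "v \<bullet> w - Rv w = v \<bullet> z - Rv z"
      using sM(3) Mv by (simp add: w_def inner_add_right inner_commute)
    also have "\<dots> = cst A B l \<mu>" using bz(2) cc(1) c0 by simp
    finally have "v \<bullet> w - Rv w = cst A B l \<mu>" .
    then have "KA \<subseteq> II w" using decomp_iff[OF wD AP BQ lpos sA mpos] vAB by (simp add: KA_def)
    then have "w \<in> FF KA" using wD by (simp add: FF_def)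
    then have Kw: "K' \<subseteq> II w" using FFeq by (auto simp: FF_def)
    have adP: "a i \<bullet> d = d \<bullet> v" if "i \<in> K' \<inter> PP" for i
    proof -
      have "ff i w = Rv w" "ff i z = Rv z" using II_P wD zD Kw that by (auto simp: K'_def)
      then have "s * (a i \<bullet> d) = s * M" using sM(3) by (simp add: w_def ff_lin)
      then show ?thesis using sM(1) Mv by simp
    qed
    have adQ: "a j \<bullet> d = 0" if "j \<in> K' \<inter> QQ" for j
    proof -
      have "ff j w = 0" "ff j z = 0" using II_Q Kw that by (auto simp: K'_def)
      then have "s * (a j \<bullet> d) = 0" by (simp add: w_def ff_lin)
      then show ?thesis using sM(1) by simp
    qed
    have "K' \<inter> PP \<noteq> {}" using i0 by blast
    then obtain u where u: "u \<in> rel_interior (CC K')" using MIs_ne ri_CC by blast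
    then have "u \<in> CC K'" using rel_interior_subset by blast
    then obtain l' \<mu>' where lm': "u = combo (K' \<inter> PP) (K' \<inter> QQ) l' \<mu>'"
      "sum l' (K' \<inter> PP) = 1"
      by (auto simp: CC_idx)
    have "d \<bullet> u = (\<Sum>i\<in>K' \<inter> PP. l' i * (d \<bullet> v)) + (\<Sum>j\<in>K' \<inter> QQ. \<mu>' j * 0)"
      using lm'(1) inner_combo adP adQ by (simp add: inner_commute)
    also have "\<dots> = d \<bullet> v" using lm'(2) by (simp add: sum_distrib_right[symmetric])
    finally have "d \<bullet> u = d \<bullet> v" .
    moreover have "d0 \<bullet> v < d0 \<bullet> u" using d0(2) u by blast
    ultimately show False by (simp add: d_def)
  qed
  show ?thesis
  proof (intro exI conjI)
    show "K' \<subseteq> {1..m}" using II_sub_m by (simp add: K'_def)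
    show "MI k m a \<alpha> K' \<noteq> {}" using zD(1) by (auto simp: MI_eq K'_def)
    show "v \<in> MIs k m a K'" using vri ri_CC by simp
  qed
qed

end



context polyf begin

abbreviation "MM K \<equiv> MI k m a \<alpha> K"
abbreviation "MMs K \<equiv> MIs k m a K"

lemma MI_ne_ex: "MM K \<noteq> {} \<Longrightarrow> \<exists>x0. x0 \<in> DD \<and> II x0 = K"
  by (auto simp: MI_eq)

lemma MI_K: assumes "MM K \<noteq> {}" shows "K \<subseteq> PP \<union> QQ" "K \<inter> PP \<noteq> {}"
  using MI_ne_ex[OF assms] II_sub II_Pne by blast+

lemma sd_MIs:
  assumes ne: "MM K \<noteq> {}" and v: "v \<in> MMs K"
  shows "subdiff (fconj RR) v = FF K"
proof -
  obtain x0 where x0: "x0 \<in> DD" "II x0 = K" using MI_ne_ex[OF ne] by blast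
  obtain l \<mu> where lm: "v = combo (K \<inter> PP) (K \<inter> QQ) l \<mu>" "\<forall>i\<in>K \<inter> PP. 0 < l i"
    "sum l (K \<inter> PP) = 1" "\<forall>j\<in>K \<inter> QQ. 0 < \<mu> j"
    using v by (auto simp: MIs_idx)
  have "subdiff (fconj RR) v = FF ((K \<inter> PP) \<union> (K \<inter> QQ))"
    using conj_combo(2)[OF x0(1) _ _ _ lm(2,3,4)] lm(1) x0(2) by auto
  moreover have "(K \<inter> PP) \<union> (K \<inter> QQ) = K" using MI_K(1)[OF ne] by blast
  ultimately show ?thesis by simp
qed

lemma JJ_R: assumes ne: "MM K \<noteq> {}" shows "JJ RR (MM K) = MMs K"
proof -
  have "rel_interior (subdiff RR x) = MMs K" if "x \<in> MM K" for x
    using that subdiff_R_eq ri_CC by (auto simp: MI_eq)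
  then show ?thesis using ne by (auto simp: JJ_def)
qed

lemma JJ_Rs: assumes ne: "MM K \<noteq> {}" shows "JJ (fconj RR) (MMs K) = MM K"
proof -
  obtain x0 where x0: "x0 \<in> DD" "II x0 = K" using MI_ne_ex[OF ne] by blast
  have "rel_interior (subdiff (fconj RR) v) = MM K" if "v \<in> MMs K" for v
    using sd_MIs[OF ne that] ri_FF[OF x0(1) x0(2)[symmetric]] by simp
  moreover have "MMs K \<noteq> {}" using MIs_ne MI_K(2)[OF ne] by blast
  ultimately show ?thesis by (auto simp: JJ_def)
qed

lemma closure_MI': assumes ne: "MM K \<noteq> {}" shows "closure (MM K) = FF K"
  using MI_ne_ex[OF ne] closure_MI by metis

lemma dom_R: "dom_subdiff RR = DD"
  using subdiff_R_out subdiff_R_eq CC_ne II_Pne by (auto simp: dom_subdiff_def)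

lemma FF_mem: "MM K \<noteq> {} \<Longrightarrow> x \<in> MM K \<Longrightarrow> x \<in> FF J \<longleftrightarrow> J \<subseteq> K"
  by (auto simp: MI_eq FF_def)

lemma strat1: "is_stratification DD {MM K | K. K \<subseteq> {1..m} \<and> MM K \<noteq> {}}"
  unfolding is_stratification_def
proof (intro conjI ballI impI)
  have "{MM K | K. K \<subseteq> {1..m} \<and> MM K \<noteq> {}} \<subseteq> MM ` Pow {1..m}" by auto
  then show "finite {MM K | K. K \<subseteq> {1..m} \<and> MM K \<noteq> {}}" by (rule finite_subset) auto
next
  fix M assume "M \<in> {MM K | K. K \<subseteq> {1..m} \<and> MM K \<noteq> {}}"
  then show "M \<noteq> {}" by auto
next
  show "\<Union>{MM K | K. K \<subseteq> {1..m} \<and> MM K \<noteq> {}} = DD"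
  proof
    show "\<Union>{MM K | K. K \<subseteq> {1..m} \<and> MM K \<noteq> {}} \<subseteq> DD" by (auto simp: MI_eq)
    show "DD \<subseteq> \<Union>{MM K | K. K \<subseteq> {1..m} \<and> MM K \<noteq> {}}"
    proof
      fix x assume x: "x \<in> DD"
      then have "x \<in> MM (II x)" by (simp add: MI_eq)
      then show "x \<in> \<Union>{MM K | K. K \<subseteq> {1..m} \<and> MM K \<noteq> {}}" using II_sub_m by blast
    qed
  qed
next
  fix M M' assume "M \<in> {MM K | K. K \<subseteq> {1..m} \<and> MM K \<noteq> {}}" "M' \<in> {MM K | K. K \<subseteq> {1..m} \<and> MM K \<noteq> {}}"
    and "M \<noteq> M'"
  then obtain K K' where "M = MM K" "M' = MM K'" "K \<noteq> K'" by auto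
  then show "M \<inter> M' = {}" by (auto simp: MI_eq)
next
  fix M M' assume M: "M \<in> {MM K | K. K \<subseteq> {1..m} \<and> MM K \<noteq> {}}" and M': "M' \<in> {MM K | K. K \<subseteq> {1..m} \<and> MM K \<noteq> {}}"
    and int: "M \<inter> closure M' \<noteq> {}"
  then obtain K K' where KK: "M = MM K" "M' = MM K'" "MM K \<noteq> {}" "MM K' \<noteq> {}" by auto
  then have cl: "closure M' = FF K'" using closure_MI' by simp
  obtain y where "y \<in> M" "y \<in> FF K'" using int cl by blast
  then have "K' \<subseteq> K" using FF_mem KK by blast
  then show "M \<subseteq> closure M'" using cl KK FF_mem by blast
qed

lemma strat2: "is_stratification (dom_subdiff (fconj RR)) {MMs K | K. K \<subseteq> {1..m} \<and> MM K \<noteq> {}}"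
  unfolding is_stratification_def
proof (intro conjI ballI impI)
  have "{MMs K | K. K \<subseteq> {1..m} \<and> MM K \<noteq> {}} \<subseteq> MMs ` Pow {1..m}" by auto
  then show "finite {MMs K | K. K \<subseteq> {1..m} \<and> MM K \<noteq> {}}" by (rule finite_subset) auto
next
  fix M assume "M \<in> {MMs K | K. K \<subseteq> {1..m} \<and> MM K \<noteq> {}}"
  then obtain K where "M = MMs K" "MM K \<noteq> {}" by blast
  then show "M \<noteq> {}" using MIs_ne[OF MI_K(2)] by simp
next
  show "\<Union>{MMs K | K. K \<subseteq> {1..m} \<and> MM K \<noteq> {}} = dom_subdiff (fconj RR)"
  proof
    show "\<Union>{MMs K | K. K \<subseteq> {1..m} \<and> MM K \<noteq> {}} \<subseteq> dom_subdiff (fconj RR)"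
    proof
      fix v assume "v \<in> \<Union>{MMs K | K. K \<subseteq> {1..m} \<and> MM K \<noteq> {}}"
      then obtain K where K: "v \<in> MMs K" "MM K \<noteq> {}" by auto
      then have "subdiff (fconj RR) v = FF K" using sd_MIs by blast
      moreover obtain x where x: "x \<in> MM K" using K by blast
      ultimately show "v \<in> dom_subdiff (fconj RR)"
        using FF_mem[OF K(2) x, of K] by (auto simp: dom_subdiff_def)
    qed
    show "dom_subdiff (fconj RR) \<subseteq> \<Union>{MMs K | K. K \<subseteq> {1..m} \<and> MM K \<noteq> {}}"
    proof
      fix v assume "v \<in> dom_subdiff (fconj RR)"
      then obtain K where "K \<subseteq> {1..m}" "MM K \<noteq> {}" "v \<in> MMs K" using cover by blast
      then show "v \<in> \<Union>{MMs K | K. K \<subseteq> {1..m} \<and> MM K \<noteq> {}}" by blast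
    qed
  qed
next
  fix M M' assume "M \<in> {MMs K | K. K \<subseteq> {1..m} \<and> MM K \<noteq> {}}" "M' \<in> {MMs K | K. K \<subseteq> {1..m} \<and> MM K \<noteq> {}}"
    and ne: "M \<noteq> M'"
  then obtain K K' where KK: "M = MMs K" "M' = MMs K'" "MM K \<noteq> {}" "MM K' \<noteq> {}" by auto
  show "M \<inter> M' = {}"
  proof (rule ccontr)
    assume "M \<inter> M' \<noteq> {}"
    then obtain v where v: "v \<in> MMs K" "v \<in> MMs K'" using KK by blast
    have "subdiff (fconj RR) v = FF K" by (rule sd_MIs[OF KK(3) v(1)])
    moreover have "subdiff (fconj RR) v = FF K'" by (rule sd_MIs[OF KK(4) v(2)])
    ultimately have FFe: "FF K = FF K'" by simp
    obtain x0 where x0: "x0 \<in> DD" "K = II x0" using MI_ne_ex[OF KK(3)] by metis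
    obtain x1 where x1: "x1 \<in> DD" "K' = II x1" using MI_ne_ex[OF KK(4)] by metis
    have "MM K = MM K'" using ri_FF[OF x0] ri_FF[OF x1] FFe by simp
    then have "JJ RR (MM K) = JJ RR (MM K')" by simp
    then have "M = M'" using JJ_R KK by simp
    then show False using ne by simp
  qed
next
  fix M M' assume M: "M \<in> {MMs K | K. K \<subseteq> {1..m} \<and> MM K \<noteq> {}}" and M': "M' \<in> {MMs K | K. K \<subseteq> {1..m} \<and> MM K \<noteq> {}}"
    and int: "M \<inter> closure M' \<noteq> {}"
  then obtain K K' where KK: "M = MMs K" "M' = MMs K'" "MM K \<noteq> {}" "MM K' \<noteq> {}" by auto
  then have cl: "closure M' = CC K'" using closure_MIs by simp
  obtain v where v: "v \<in> MMs K" "v \<in> CC K'" using int cl KK by blast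
  obtain x' where x': "x' \<in> DD" "II x' = K'" using MI_ne_ex KK by blast
  have "v \<in> subdiff RR x'" using v x' subdiff_R_eq by simp
  then have "x' \<in> subdiff (fconj RR) v" using subdiff_conj by blast
  then have "x' \<in> FF K" using sd_MIs[OF KK(3) v(1)] by simp
  then have "K \<subseteq> K'" using x' by (simp add: FF_def)
  then show "M \<subseteq> closure M'" using cl KK MIs_sub_CC CC_mono by blast
qed

lemma mirror: "mirror_stratifiable RR {MM K | K. K \<subseteq> {1..m} \<and> MM K \<noteq> {}}
   {MMs K | K. K \<subseteq> {1..m} \<and> MM K \<noteq> {}}"
  unfolding mirror_stratifiable_def
proof (intro conjI ballI)
  show "is_stratification (dom_subdiff RR) {MM K | K. K \<subseteq> {1..m} \<and> MM K \<noteq> {}}"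
    using strat1 dom_R by simp
  show "is_stratification (dom_subdiff (fconj RR)) {MMs K | K. K \<subseteq> {1..m} \<and> MM K \<noteq> {}}"
    by (rule strat2)
  show "bij_betw (JJ RR) {MM K | K. K \<subseteq> {1..m} \<and> MM K \<noteq> {}} {MMs K | K. K \<subseteq> {1..m} \<and> MM K \<noteq> {}}"
    unfolding bij_betw_def
  proof
    show "inj_on (JJ RR) {MM K | K. K \<subseteq> {1..m} \<and> MM K \<noteq> {}}"
    proof (rule inj_onI)
      fix M M' assume "M \<in> {MM K | K. K \<subseteq> {1..m} \<and> MM K \<noteq> {}}" "M' \<in> {MM K | K. K \<subseteq> {1..m} \<and> MM K \<noteq> {}}"
        and eq: "JJ RR M = JJ RR M'"
      then obtain K K' where KK: "M = MM K" "M' = MM K'" "MM K \<noteq> {}" "MM K' \<noteq> {}" by auto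
      then have e: "MMs K = MMs K'" using eq JJ_R by simp
      have "M = JJ (fconj RR) (MMs K)" using JJ_Rs[OF KK(3)] KK(1) by simp
      also have "\<dots> = JJ (fconj RR) (MMs K')" by (simp only: e)
      also have "\<dots> = M'" using JJ_Rs[OF KK(4)] KK(2) by simp
      finally show "M = M'" .
    qed
    show "JJ RR ` {MM K | K. K \<subseteq> {1..m} \<and> MM K \<noteq> {}} = {MMs K | K. K \<subseteq> {1..m} \<and> MM K \<noteq> {}}"
    proof
      show "JJ RR ` {MM K | K. K \<subseteq> {1..m} \<and> MM K \<noteq> {}} \<subseteq> {MMs K | K. K \<subseteq> {1..m} \<and> MM K \<noteq> {}}"
      proof
        fix Ms assume "Ms \<in> JJ RR ` {MM K | K. K \<subseteq> {1..m} \<and> MM K \<noteq> {}}"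
        then obtain K where K: "Ms = JJ RR (MM K)" "K \<subseteq> {1..m}" "MM K \<noteq> {}" by blast
        then have "Ms = MMs K" using JJ_R by simp
        then show "Ms \<in> {MMs K | K. K \<subseteq> {1..m} \<and> MM K \<noteq> {}}" using K by blast
      qed
      show "{MMs K | K. K \<subseteq> {1..m} \<and> MM K \<noteq> {}} \<subseteq> JJ RR ` {MM K | K. K \<subseteq> {1..m} \<and> MM K \<noteq> {}}"
      proof
        fix Ms assume "Ms \<in> {MMs K | K. K \<subseteq> {1..m} \<and> MM K \<noteq> {}}"
        then obtain K where K: "Ms = MMs K" "K \<subseteq> {1..m}" "MM K \<noteq> {}" by blast
        then have "Ms = JJ RR (MM K)" using JJ_R by simp
        then show "Ms \<in> JJ RR ` {MM K | K. K \<subseteq> {1..m} \<and> MM K \<noteq> {}}" using K by blast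
      qed
    qed
  qed
next
  fix M Ms assume "M \<in> {MM K | K. K \<subseteq> {1..m} \<and> MM K \<noteq> {}}" "Ms \<in> {MMs K | K. K \<subseteq> {1..m} \<and> MM K \<noteq> {}}"
  then obtain K K' where KK: "M = MM K" "Ms = MMs K'" "MM K \<noteq> {}" "MM K' \<noteq> {}" by auto
  show "Ms = JJ RR M \<longleftrightarrow> JJ (fconj RR) Ms = M"
  proof
    assume "Ms = JJ RR M"
    then have e: "MMs K' = MMs K" using KK JJ_R by simp
    have "JJ (fconj RR) Ms = JJ (fconj RR) (MMs K)" using KK(2) e by simp
    also have "\<dots> = M" using JJ_Rs[OF KK(3)] KK(1) by simp
    finally show "JJ (fconj RR) Ms = M" .
  next
    assume "JJ (fconj RR) Ms = M"
    then have e: "MM K' = MM K" using KK JJ_Rs by simp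
    have "Ms = JJ RR (MM K')" using JJ_R[OF KK(4)] KK(2) by simp
    also have "\<dots> = JJ RR M" using KK(1) e by simp
    finally show "Ms = JJ RR M" .
  qed
next
  fix M M' assume "M \<in> {MM K | K. K \<subseteq> {1..m} \<and> MM K \<noteq> {}}" "M' \<in> {MM K | K. K \<subseteq> {1..m} \<and> MM K \<noteq> {}}"
  then obtain K K' where KK: "M = MM K" "M' = MM K'" "MM K \<noteq> {}" "MM K' \<noteq> {}" by auto
  have c1: "closure M' = FF K'" using closure_MI' KK by simp
  have c2: "closure (JJ RR M) = CC K" using JJ_R closure_MIs KK by simp
  have j2: "JJ RR M' = MMs K'" using JJ_R KK by simp
  obtain x where x: "x \<in> MM K" using KK by blast
  show "M \<subseteq> closure M' \<longleftrightarrow> JJ RR M' \<subseteq> closure (JJ RR M)"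
  proof
    assume "M \<subseteq> closure M'"
    then have "K' \<subseteq> K" using x c1 KK FF_mem by blast
    then show "JJ RR M' \<subseteq> closure (JJ RR M)" using c2 j2 MIs_sub_CC CC_mono by blast
  next
    assume H: "JJ RR M' \<subseteq> closure (JJ RR M)"
    obtain v where v: "v \<in> MMs K'" using MIs_ne[OF MI_K(2)[OF KK(4)]] by blast
    have xD: "x \<in> DD" "II x = K" using x by (auto simp: MI_eq)
    have "v \<in> subdiff RR x" using H c2 j2 v subdiff_R_eq xD by auto
    then have "x \<in> subdiff (fconj RR) v" using subdiff_conj by blast
    then have "x \<in> FF K'" using sd_MIs[OF KK(4) v] by simp
    then have "K' \<subseteq> K" using xD by (simp add: FF_def)
    then show "M \<subseteq> closure M'" using c1 KK FF_mem by blast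
  qed
qed

end

theorem proposition2p2:
  fixes k m :: nat and a :: "nat \<Rightarrow> 'a::euclidean_space" and \<alpha> :: "nat \<Rightarrow> real"
  assumes "1 \<le> k" and "k \<le> m"
    and "edom (polyR k m a \<alpha>) \<noteq> {}"
  shows "is_stratification (edom (polyR k m a \<alpha>))
           {MI k m a \<alpha> I | I. I \<subseteq> {1..m} \<and> MI k m a \<alpha> I \<noteq> {}}
       \<and> (\<forall>I. I \<subseteq> {1..m} \<and> MI k m a \<alpha> I \<noteq> {} \<longrightarrow>
              JJ (polyR k m a \<alpha>) (MI k m a \<alpha> I) = MIs k m a I \<and>
              JJ (fconj (polyR k m a \<alpha>)) (MIs k m a I) = MI k m a \<alpha> I)
       \<and> mirror_stratifiable (polyR k m a \<alpha>)
           {MI k m a \<alpha> I | I. I \<subseteq> {1..m} \<and> MI k m a \<alpha> I \<noteq> {}}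
           {MIs k m a I | I. I \<subseteq> {1..m} \<and> MI k m a \<alpha> I \<noteq> {}}"
proof -
  interpret polyf k m a \<alpha> using assms(1,2) by unfold_locales
  show ?thesis
  proof (intro conjI allI impI)
    show "is_stratification (edom (polyR k m a \<alpha>)) {MI k m a \<alpha> I | I. I \<subseteq> {1..m} \<and> MI k m a \<alpha> I \<noteq> {}}"
      unfolding edom_eq by (rule strat1)
    fix I assume "I \<subseteq> {1..m} \<and> MI k m a \<alpha> I \<noteq> {}"
    then show "JJ (polyR k m a \<alpha>) (MI k m a \<alpha> I) = MIs k m a I"
      "JJ (fconj (polyR k m a \<alpha>)) (MIs k m a I) = MI k m a \<alpha> I"
      using JJ_R[of I] JJ_Rs[of I] by simp_all
  next
    show "mirror_stratifiable (polyR k m a \<alpha>)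
           {MI k m a \<alpha> I | I. I \<subseteq> {1..m} \<and> MI k m a \<alpha> I \<noteq> {}}
           {MIs k m a I | I. I \<subseteq> {1..m} \<and> MI k m a \<alpha> I \<noteq> {}}" by (rule mirror)
  qed
qed


end
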